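(* $MCF(G,\sigma)\subseteq MA(G,\sigma)$, and $$MCF(G,\sigma)=\{\varphi\in MA(G,\sigma)\mid M_\varphi(C^*_r(G,\sigma))\subseteq CF(G,\sigma)\}.$$ Moreover, if $\varphi\in MCF(G,\sigma)$, then for every $x\in C^*_r(G,\sigma)$ the series $\sum_{g\in G}\varphi(g)\widehat x(g)\Lambda_\sigma(g)$ converges to $M_\varphi(x)$ in operator norm.
   Context: $G$ is a discrete group, $\sigma:G\times G\to\mathbb{T}$ a normalized 2-cocycle ($\sigma(g,h)\sigma(gh,k)=\sigma(h,k)\sigma(g,hk)$, $\sigma(g,e)=\sigma(e,g)=1$); $\Lambda_\sigma(g)$ is the unitary on $\ell^2(G)$ with $(\Lambda_\sigma(g)\xi)(h)=\sigma(g,g^{-1}h)\xi(g^{-1}h)$; $C^*_r(G,\sigma)$ is the operator-norm closure of $\mathbb{C}(G,\sigma)=\mathrm{span}\,\Lambda_\sigma(G)$. For $x\in C^*_r(G,\sigma)$, $\widehat x=x\delta_e\in\ell^2(G)$, and its Fourier series is $\sum_g\widehat x(g)\Lambda_\sigma(g)$ (series over $G$ converge as nets of finite partial sums); $CF(G,\sigma)$ is the set of $x\in C^*_r(G,\sigma)$ whose Fourier series converges in operator norm. For $\varphi:G\to\mathbb{C}$, $M_\varphi$ is the linear map on $\mathbb{C}(G,\sigma)$ with $M_\varphi(\Lambda_\sigma(g))=\varphi(g)\Lambda_\sigma(g)$; $MA(G,\sigma)$ is the set of $\varphi$ such that $M_\varphi$ is bounded in operator norm, and then $M_\varphi$ denotes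 its bounded extension to $C^*_r(G,\sigma)$. $MCF(G,\sigma)$ is the set of $\varphi:G\to\mathbb{C}$ such that $\sum_g\varphi(g)\widehat x(g)\Lambda_\sigma(g)$ converges in operator norm for every $x\in C^*_r(G,\sigma)$. *)

theory Defs
  imports "HOL-Analysis.Analysis"
begin

class mgroup = monoid_mult + inverse +
  assumes mgroup_left_inverse: "inverse a * a = 1"

definition cocycle2 :: "('g::mgroup \<Rightarrow> 'g \<Rightarrow> complex) \<Rightarrow> bool" where
  "cocycle2 \<sigma> \<longleftrightarrow> (\<forall>g h. cmod (\<sigma> g h) = 1)
     \<and> (\<forall>g h k. \<sigma> g h * \<sigma> (g * h) k = \<sigma> h k * \<sigma> g (h * k))
     \<and> (\<forall>g. \<sigma> g 1 = 1 \<and> \<sigma> 1 g = 1)"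

definition l2 :: "('g \<Rightarrow> complex) set" where
  "l2 = {\<xi>. (\<lambda>h. (cmod (\<xi> h))\<^sup>2) summable_on UNIV}"

definition l2norm :: "('g \<Rightarrow> complex) \<Rightarrow> real" where
  "l2norm \<xi> = sqrt (\<Sum>\<^sub>\<infinity>h. (cmod (\<xi> h))\<^sup>2)"

text \<open>Operators are maps on functions G -> C; only their behaviour on l2 matters.\<close>
type_synonym 'g op = "('g \<Rightarrow> complex) \<Rightarrow> ('g \<Rightarrow> complex)"

definition bounded_op :: "'g op \<Rightarrow> bool" where
  "bounded_op T \<longleftrightarrow> (\<forall>\<xi>\<in>l2. T \<xi> \<in> l2)
     \<and> (\<forall>\<xi>\<in>l2. \<forall>\<eta>\<in>l2. \<forall>a b. T (\<lambda>h. a * \<xi> h + b * \<eta> h) = (\<lambda>h. a * T \<xi> h + b * T \<eta> h))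
     \<and> (\<exists>C. \<forall>\<xi>\<in>l2. l2norm (T \<xi>) \<le> C * l2norm \<xi>)"

text \<open>Operator norm (meaningful for bounded operators).\<close>
definition opnorm :: "'g op \<Rightarrow> real" where
  "opnorm T = Sup {l2norm (T \<xi>) | \<xi>. \<xi> \<in> l2 \<and> l2norm \<xi> \<le> 1}"

definition op_diff :: "'g op \<Rightarrow> 'g op \<Rightarrow> 'g op" where
  "op_diff T S = (\<lambda>\<xi> h. T \<xi> h - S \<xi> h)"

definition Lambda :: "('g::mgroup \<Rightarrow> 'g \<Rightarrow> complex) \<Rightarrow> 'g \<Rightarrow> 'g op" where
  "Lambda \<sigma> g = (\<lambda>\<xi> h. \<sigma> g (inverse g * h) * \<xi> (inverse g * h))"

definition lincomb :: "('g::mgroup \<Rightarrow> 'g \<Rightarrow> complex) \<Rightarrow> ('g \<Rightarrow> complex) \<Rightarrow> 'g set \<Rightarrow> 'g op" where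
  "lincomb \<sigma> c F = (\<lambda>\<xi> h. \<Sum>g\<in>F. c g * Lambda \<sigma> g \<xi> h)"

definition CG :: "('g::mgroup \<Rightarrow> 'g \<Rightarrow> complex) \<Rightarrow> 'g op set" where
  "CG \<sigma> = {lincomb \<sigma> c F | c F. finite F}"

definition Cred :: "('g::mgroup \<Rightarrow> 'g \<Rightarrow> complex) \<Rightarrow> 'g op set" where
  "Cred \<sigma> = {x. bounded_op x \<and> (\<forall>\<epsilon>>0. \<exists>y\<in>CG \<sigma>. opnorm (op_diff x y) < \<epsilon>)}"

definition delta :: "'g \<Rightarrow> ('g \<Rightarrow> complex)" where
  "delta g = (\<lambda>h. if h = g then 1 else 0)"

definition fhat :: "'g::mgroup op \<Rightarrow> ('g \<Rightarrow> complex)" where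
  "fhat x = x (delta 1)"

definition op_sums :: "('g::mgroup \<Rightarrow> 'g \<Rightarrow> complex) \<Rightarrow> ('g \<Rightarrow> complex) \<Rightarrow> 'g op \<Rightarrow> bool" where
  "op_sums \<sigma> a T \<longleftrightarrow> bounded_op T \<and>
     ((\<lambda>F. opnorm (op_diff (lincomb \<sigma> a F) T)) \<longlongrightarrow> 0) (finite_subsets_at_top UNIV)"

definition CF :: "('g::mgroup \<Rightarrow> 'g \<Rightarrow> complex) \<Rightarrow> 'g op set" where
  "CF \<sigma> = {x \<in> Cred \<sigma>. \<exists>T. op_sums \<sigma> (fhat x) T}"

text \<open>Multipliers: M_phi (sum c(g) Lambda(g)) = sum phi(g) c(g) Lambda(g) is bounded on C(G,sigma).\<close>
definition MA :: "('g::mgroup \<Rightarrow> 'g \<Rightarrow> complex) \<Rightarrow> ('g \<Rightarrow> complex) set" where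
  "MA \<sigma> = {\<phi>. \<exists>C. \<forall>c F. finite F \<longrightarrow>
      opnorm (lincomb \<sigma> (\<lambda>g. \<phi> g * c g) F) \<le> C * opnorm (lincomb \<sigma> c F)}"

text \<open>T is the value at x of the continuous extension of M_phi from C(G,sigma) to C*_r(G,sigma).\<close>
definition is_Mext :: "('g::mgroup \<Rightarrow> 'g \<Rightarrow> complex) \<Rightarrow> ('g \<Rightarrow> complex) \<Rightarrow> 'g op \<Rightarrow> 'g op \<Rightarrow> bool" where
  "is_Mext \<sigma> \<phi> x T \<longleftrightarrow> bounded_op T \<and>
     (\<forall>\<epsilon>>0. \<exists>\<delta>>0. \<forall>c F. finite F \<and> opnorm (op_diff x (lincomb \<sigma> c F)) < \<delta> \<longrightarrow>
        opnorm (op_diff T (lincomb \<sigma> (\<lambda>g. \<phi> g * c g) F)) < \<epsilon>)"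

definition Mext :: "('g::mgroup \<Rightarrow> 'g \<Rightarrow> complex) \<Rightarrow> ('g \<Rightarrow> complex) \<Rightarrow> 'g op \<Rightarrow> 'g op" where
  "Mext \<sigma> \<phi> x = (SOME T. is_Mext \<sigma> \<phi> x T)"

definition MCF :: "('g::mgroup \<Rightarrow> 'g \<Rightarrow> complex) \<Rightarrow> ('g \<Rightarrow> complex) set" where
  "MCF \<sigma> = {\<phi>. \<forall>x\<in>Cred \<sigma>. \<exists>T. op_sums \<sigma> (\<lambda>g. \<phi> g * fhat x g) T}"

end

theory Submission
  imports Defs
begin

section \<open>Group facts\<close>

lemma mg_right_inverse: "(a::'g::mgroup) * inverse a = 1"
proof -
  have "a * inverse a = (inverse (inverse a) * inverse a) * (a * inverse a)"
    by (simp add: mgroup_left_inverse)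
  also have "\<dots> = inverse (inverse a) * ((inverse a * a) * inverse a)"
    by (simp add: mult.assoc)
  also have "\<dots> = 1" by (simp add: mgroup_left_inverse)
  finally show ?thesis .
qed

lemma mg_cancel_left: "inverse (a::'g::mgroup) * (a * b) = b"
  by (simp add: mult.assoc[symmetric] mgroup_left_inverse)

lemma mg_cancel_left2: "(a::'g::mgroup) * (inverse a * b) = b"
  by (simp add: mult.assoc[symmetric] mg_right_inverse)

lemma mg_inv_mult_eq1: "inverse (k::'g::mgroup) * g = 1 \<longleftrightarrow> k = g"
proof
  assume "inverse k * g = 1"
  then have "k * (inverse k * g) = k" by simp
  then show "k = g" by (simp add: mg_cancel_left2)
qed (simp add: mgroup_left_inverse)

lemma mg_bij: "bij_betw (\<lambda>h. inverse (g::'g::mgroup) * h) UNIV UNIV"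
  by (rule bij_betwI[where g="\<lambda>h. g * h"]) (auto simp: mg_cancel_left mg_cancel_left2)

section \<open>l2 basics\<close>

lemma l2norm_nonneg: "0 \<le> l2norm \<xi>"
  unfolding l2norm_def by (simp add: infsum_nonneg)

lemma l2_fin:
  assumes "\<xi> \<in> l2" "finite F"
  shows "L2_set (\<lambda>h. cmod (\<xi> h)) F \<le> l2norm \<xi>"
proof -
  have "(\<Sum>h\<in>F. (cmod (\<xi> h))\<^sup>2) \<le> (\<Sum>\<^sub>\<infinity>h. (cmod (\<xi> h))\<^sup>2)"
    using assms by (intro finite_sum_le_infsum) (auto simp: l2_def)
  then show ?thesis unfolding L2_set_def l2norm_def by (rule real_sqrt_le_mono)
qed

lemma l2_bound:
  assumes "0 \<le> B" "\<And>F. finite F \<Longrightarrow> L2_set (\<lambda>h. cmod (\<xi> h)) F \<le> B"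
  shows "\<xi> \<in> l2 \<and> l2norm \<xi> \<le> B"
proof -
  have fin: "(\<Sum>h\<in>F. (cmod (\<xi> h))\<^sup>2) \<le> B\<^sup>2" if "finite F" for F
  proof -
    have "sqrt (\<Sum>h\<in>F. (cmod (\<xi> h))\<^sup>2) \<le> B" using assms(2)[OF that] by (simp add: L2_set_def)
    then show ?thesis using assms(1) by (metis real_le_lsqrt real_sqrt_le_iff sum_nonneg zero_le_power2 real_sqrt_pow2 power_mono real_sqrt_ge_zero)
  qed
  have sm: "(\<lambda>h. (cmod (\<xi> h))\<^sup>2) summable_on UNIV"
    by (rule nonneg_bdd_above_summable_on) (auto intro!: bdd_aboveI[where M="B\<^sup>2"] fin)
  have "(\<Sum>\<^sub>\<infinity>h. (cmod (\<xi> h))\<^sup>2) \<le> B\<^sup>2"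
    by (rule infsum_le_finite_sums[OF sm]) (simp add: fin)
  then have "l2norm \<xi> \<le> sqrt (B\<^sup>2)" unfolding l2norm_def by (rule real_sqrt_le_mono)
  with assms(1) sm show ?thesis by (simp add: l2_def)
qed

lemma l2_point: "\<xi> \<in> l2 \<Longrightarrow> cmod (\<xi> h) \<le> l2norm \<xi>"
  using l2_fin[of \<xi> "{h}"] by simp

lemma l2_lin:
  assumes "\<xi> \<in> l2" "\<eta> \<in> l2"
  shows "(\<lambda>h. a * \<xi> h + b * \<eta> h) \<in> l2 \<and> l2norm (\<lambda>h. a * \<xi> h + b * \<eta> h) \<le> cmod a * l2norm \<xi> + cmod b * l2norm \<eta>"
proof (rule l2_bound)
  show "0 \<le> cmod a * l2norm \<xi> + cmod b * l2norm \<eta>" by (simp add: l2norm_nonneg)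
  fix F :: "'a set" assume F: "finite F"
  have "L2_set (\<lambda>h. cmod (a * \<xi> h + b * \<eta> h)) F \<le> L2_set (\<lambda>h. cmod a * cmod (\<xi> h) + cmod b * cmod (\<eta> h)) F"
    by (rule L2_set_mono) (auto intro: order_trans[OF norm_triangle_ineq] simp: norm_mult)
  also have "\<dots> \<le> L2_set (\<lambda>h. cmod a * cmod (\<xi> h)) F + L2_set (\<lambda>h. cmod b * cmod (\<eta> h)) F"
    by (rule L2_set_triangle_ineq)
  also have "\<dots> = cmod a * L2_set (\<lambda>h. cmod (\<xi> h)) F + cmod b * L2_set (\<lambda>h. cmod (\<eta> h)) F"
    by (simp add: L2_set_right_distrib)
  also have "\<dots> \<le> cmod a * l2norm \<xi> + cmod b * l2norm \<eta>"
    using l2_fin[OF assms(1) F] l2_fin[OF assms(2) F] by (intro add_mono mult_left_mono) auto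
  finally show "L2_set (\<lambda>h. cmod (a * \<xi> h + b * \<eta> h)) F \<le> cmod a * l2norm \<xi> + cmod b * l2norm \<eta>" .
qed

lemma l2norm_cong: "(\<And>h. cmod (\<xi> h) = cmod (\<eta> h)) \<Longrightarrow> l2norm \<xi> = l2norm \<eta>"
  unfolding l2norm_def by simp

lemma l2_cong: "(\<And>h. cmod (\<xi> h) = cmod (\<eta> h)) \<Longrightarrow> \<xi> \<in> l2 \<longleftrightarrow> \<eta> \<in> l2"
  unfolding l2_def by simp

lemma l2_zero: "(\<lambda>h. 0) \<in> l2" and l2norm_zero: "l2norm (\<lambda>h. 0) = 0"
  by (simp_all add: l2_def l2norm_def)

lemma l2norm_eq0: "\<xi> \<in> l2 \<Longrightarrow> l2norm \<xi> = 0 \<Longrightarrow> \<xi> = (\<lambda>h. 0)"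
  using l2_point[of \<xi>] by (metis norm_le_zero_iff)

lemma l2_scale: "\<xi> \<in> l2 \<Longrightarrow> (\<lambda>h. a * \<xi> h) \<in> l2 \<and> l2norm (\<lambda>h. a * \<xi> h) = cmod a * l2norm \<xi>"
proof -
  assume x: "\<xi> \<in> l2"
  have "(\<lambda>h. (cmod (a * \<xi> h))\<^sup>2) = (\<lambda>h. (cmod a)\<^sup>2 * (cmod (\<xi> h))\<^sup>2)"
    by (simp add: norm_mult power_mult_distrib)
  moreover have "(\<lambda>h. (cmod (\<xi> h))\<^sup>2) summable_on UNIV" using x by (simp add: l2_def)
  ultimately show ?thesis
    unfolding l2_def l2norm_def
    by (simp add: summable_on_cmult_right infsum_cmult_right real_sqrt_mult)
qed

lemma delta_l2: "delta k \<in> l2" and delta_norm: "l2norm (delta k) = 1"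
proof -
  have e: "(\<lambda>h. (cmod (delta k h))\<^sup>2) = (\<lambda>h. if h = k then 1 else 0)"
    by (auto simp: delta_def)
  have "((\<lambda>h. (cmod (delta k h))\<^sup>2) has_sum 1) UNIV"
    unfolding e using has_sum_finite[of "{k}" "\<lambda>h. if h = k then 1 else (0::real)"]
    by (subst has_sum_cong_neutral[where T="{k}"]) auto
  then show "delta k \<in> l2" "l2norm (delta k) = 1"
    by (auto simp: l2_def l2norm_def summable_on_def infsumI)
qed

lemma l2_fatou:
  assumes lim: "\<And>h. (\<lambda>m. \<zeta> m h) \<longlonglongrightarrow> z h"
    and bnd: "\<And>m. m \<ge> N \<Longrightarrow> \<zeta> m \<in> l2 \<and> l2norm (\<zeta> m) \<le> B"
  shows "z \<in> l2 \<and> l2norm z \<le> B"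
proof (rule l2_bound)
  show "0 \<le> B" using bnd[of N] l2norm_nonneg[of "\<zeta> N"] by auto
  fix F :: "'a set" assume F: "finite F"
  have "(\<lambda>m. L2_set (\<lambda>h. cmod (\<zeta> m h)) F) \<longlonglongrightarrow> L2_set (\<lambda>h. cmod (z h)) F"
    unfolding L2_set_def by (intro tendsto_intros lim)
  moreover have "\<forall>\<^sub>F m in sequentially. L2_set (\<lambda>h. cmod (\<zeta> m h)) F \<le> B"
    unfolding eventually_sequentially using bnd l2_fin[OF _ F] by (meson order_trans)
  ultimately show "L2_set (\<lambda>h. cmod (z h)) F \<le> B"
    by (rule tendsto_upperbound) simp
qed

definition oplin :: "complex \<Rightarrow> 'g op \<Rightarrow> complex \<Rightarrow> 'g op \<Rightarrow> 'g op" where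
  "oplin a A b B = (\<lambda>\<xi> h. a * A \<xi> h + b * B \<xi> h)"

lemma op_diff_oplin: "op_diff A B = oplin 1 A (-1) B"
  by (simp add: op_diff_def oplin_def)

lemma opnorm_le:
  assumes "0 \<le> B" "\<And>\<xi>. \<xi> \<in> l2 \<Longrightarrow> l2norm (T \<xi>) \<le> B * l2norm \<xi>"
  shows "opnorm T \<le> B"
  unfolding opnorm_def
proof (rule cSup_least)
  have "l2norm (T (\<lambda>h. 0)) \<in> {l2norm (T \<xi>) |\<xi>. \<xi> \<in> l2 \<and> l2norm \<xi> \<le> 1}"
    by (intro CollectI exI[where x="\<lambda>h. 0"]) (simp add: l2_zero l2norm_zero)
  then show "{l2norm (T \<xi>) |\<xi>. \<xi> \<in> l2 \<and> l2norm \<xi> \<le> 1} \<noteq> {}" by blast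
  fix r assume "r \<in> {l2norm (T \<xi>) |\<xi>. \<xi> \<in> l2 \<and> l2norm \<xi> \<le> 1}"
  then obtain \<xi> where "r = l2norm (T \<xi>)" "\<xi> \<in> l2" "l2norm \<xi> \<le> 1" by auto
  then show "r \<le> B" using assms(2)[of \<xi>] mult_left_mono[of "l2norm \<xi>" 1 B] assms(1) by auto
qed

lemma bounded_op_bdd:
  assumes "bounded_op T"
  shows "bdd_above {l2norm (T \<xi>) |\<xi>. \<xi> \<in> l2 \<and> l2norm \<xi> \<le> 1}"
proof -
  obtain C where C: "\<And>\<xi>. \<xi> \<in> l2 \<Longrightarrow> l2norm (T \<xi>) \<le> C * l2norm \<xi>"
    using assms unfolding bounded_op_def by blast
  show ?thesis
  proof (rule bdd_aboveI[where M="\<bar>C\<bar>"])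
    fix r assume "r \<in> {l2norm (T \<xi>) |\<xi>. \<xi> \<in> l2 \<and> l2norm \<xi> \<le> 1}"
    then obtain \<xi> where "r = l2norm (T \<xi>)" "\<xi> \<in> l2" "l2norm \<xi> \<le> 1" by auto
    moreover have "C * l2norm \<xi> \<le> \<bar>C\<bar>"
      using \<open>l2norm \<xi> \<le> 1\<close> l2norm_nonneg[of \<xi>]
      by (metis abs_ge_self abs_mult abs_of_nonneg mult_left_le mult_right_mono order_trans abs_ge_zero)
    ultimately show "r \<le> \<bar>C\<bar>" using C by (meson order_trans)
  qed
qed

lemma bounded_op_linD:
  "bounded_op T \<Longrightarrow> \<xi> \<in> l2 \<Longrightarrow> \<eta> \<in> l2 \<Longrightarrow> T (\<lambda>h. a * \<xi> h + b * \<eta> h) = (\<lambda>h. a * T \<xi> h + b * T \<eta> h)"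
  unfolding bounded_op_def by blast

lemma bounded_op_l2D: "bounded_op T \<Longrightarrow> \<xi> \<in> l2 \<Longrightarrow> T \<xi> \<in> l2"
  unfolding bounded_op_def by blast

lemma bounded_op_scale: "bounded_op T \<Longrightarrow> \<xi> \<in> l2 \<Longrightarrow> T (\<lambda>h. a * \<xi> h) = (\<lambda>h. a * T \<xi> h)"
  using bounded_op_linD[of T \<xi> \<xi> a 0] by simp

lemma bounded_op_zero: "bounded_op T \<Longrightarrow> T (\<lambda>h. 0) = (\<lambda>h. 0)"
  using bounded_op_scale[of T "\<lambda>h. 0" 0] l2_zero by simp

lemma opnorm_ge: "bounded_op T \<Longrightarrow> \<xi> \<in> l2 \<Longrightarrow> l2norm \<xi> \<le> 1 \<Longrightarrow> l2norm (T \<xi>) \<le> opnorm T"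
  unfolding opnorm_def by (rule cSup_upper) (auto intro: bounded_op_bdd)

lemma opnorm_nonneg: "bounded_op T \<Longrightarrow> 0 \<le> opnorm T"
  using opnorm_ge[of T "\<lambda>h. 0"] l2_zero l2norm_zero l2norm_nonneg by (metis zero_le_one order_trans)

lemma op_bound:
  assumes T: "bounded_op T" and x: "\<xi> \<in> l2"
  shows "l2norm (T \<xi>) \<le> opnorm T * l2norm \<xi>"
proof (cases "l2norm \<xi> = 0")
  case True
  then have "\<xi> = (\<lambda>h. 0)" using l2norm_eq0 x by blast
  then show ?thesis using bounded_op_zero[OF T] by (simp add: l2norm_zero)
next
  case False
  then have pos: "l2norm \<xi> > 0" using l2norm_nonneg[of \<xi>] by simp
  define a where "a = complex_of_real (1 / l2norm \<xi>)"
  have ca: "cmod a = 1 / l2norm \<xi>" using pos by (simp add: a_def norm_divide)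
  have n1: "l2norm (\<lambda>h. a * \<xi> h) = 1" using l2_scale[OF x, of a] ca pos by simp
  have "l2norm (T (\<lambda>h. a * \<xi> h)) \<le> opnorm T"
    by (rule opnorm_ge[OF T]) (use l2_scale[OF x, of a] n1 in auto)
  moreover have "l2norm (T (\<lambda>h. a * \<xi> h)) = l2norm (T \<xi>) / l2norm \<xi>"
    using bounded_op_scale[OF T x, of a] l2_scale[OF bounded_op_l2D[OF T x], of a] ca by simp
  ultimately show ?thesis using pos by (simp add: divide_le_eq mult.commute)
qed

lemma opnorm_cong:
  assumes "\<And>\<xi>. \<xi> \<in> l2 \<Longrightarrow> A \<xi> = B \<xi>" shows "opnorm A = opnorm B"
proof -
  have "{l2norm (A \<xi>) |\<xi>. \<xi> \<in> l2 \<and> l2norm \<xi> \<le> 1} = {l2norm (B \<xi>) |\<xi>. \<xi> \<in> l2 \<and> l2norm \<xi> \<le> 1}"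
    using assms by metis
  then show ?thesis unfolding opnorm_def by simp
qed

lemma bounded_op_cong:
  fixes A B :: "'g op"
  assumes "\<And>\<xi>. \<xi> \<in> l2 \<Longrightarrow> A \<xi> = B \<xi>" "bounded_op A"
  shows "bounded_op B"
proof -
  have AB: "\<xi> \<in> l2 \<Longrightarrow> A \<xi> = B \<xi>" for \<xi> using assms(1) .
  show ?thesis using assms(2) unfolding bounded_op_def
  proof (elim conjE exE, intro conjI)
    fix C assume C: "\<forall>\<xi>\<in>l2. l2norm (A \<xi>) \<le> C * l2norm \<xi>"
    show "\<exists>C. \<forall>\<xi>\<in>l2. l2norm (B \<xi>) \<le> C * l2norm \<xi>" using C AB by metis
  next
    assume "\<forall>\<xi>\<in>l2. A \<xi> \<in> l2" then show "\<forall>\<xi>\<in>l2. B \<xi> \<in> l2" using AB by metis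
  next
    assume L: "\<forall>\<xi>\<in>l2. \<forall>\<eta>\<in>l2. \<forall>a b. A (\<lambda>h. a * \<xi> h + b * \<eta> h) = (\<lambda>h. a * A \<xi> h + b * A \<eta> h)"
    show "\<forall>\<xi>\<in>l2. \<forall>\<eta>\<in>l2. \<forall>a b. B (\<lambda>h. a * \<xi> h + b * \<eta> h) = (\<lambda>h. a * B \<xi> h + b * B \<eta> h)"
    proof (intro ballI allI)
      fix \<xi> \<eta> :: "'g \<Rightarrow> complex" and a b assume x: "\<xi> \<in> l2" and y: "\<eta> \<in> l2"
      have "(\<lambda>h. a * \<xi> h + b * \<eta> h) \<in> l2" using l2_lin[OF x y] by blast
      then show "B (\<lambda>h. a * \<xi> h + b * \<eta> h) = (\<lambda>h. a * B \<xi> h + b * B \<eta> h)"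
        using L x y AB by metis
    qed
  qed
qed

lemma bounded_opI:
  assumes "\<And>\<xi>. \<xi> \<in> l2 \<Longrightarrow> T \<xi> \<in> l2"
    "\<And>\<xi> \<eta> a b. \<xi> \<in> l2 \<Longrightarrow> \<eta> \<in> l2 \<Longrightarrow> T (\<lambda>h. a * \<xi> h + b * \<eta> h) = (\<lambda>h. a * T \<xi> h + b * T \<eta> h)"
    "\<And>\<xi>. \<xi> \<in> l2 \<Longrightarrow> l2norm (T \<xi>) \<le> C * l2norm \<xi>"
  shows "bounded_op T"
  using assms unfolding bounded_op_def by blast

lemma bounded_oplin:
  fixes A B :: "'g op"
  assumes A: "bounded_op A" and B: "bounded_op B"
  shows "bounded_op (oplin a A b B)"
proof (rule bounded_opI)
  fix \<xi> :: "'g \<Rightarrow> complex" assume x: "\<xi> \<in> l2"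
  show "oplin a A b B \<xi> \<in> l2" unfolding oplin_def
    using l2_lin[OF bounded_op_l2D[OF A x] bounded_op_l2D[OF B x]] by blast
  show "l2norm (oplin a A b B \<xi>) \<le> (cmod a * opnorm A + cmod b * opnorm B) * l2norm \<xi>"
  proof -
    have "l2norm (oplin a A b B \<xi>) \<le> cmod a * l2norm (A \<xi>) + cmod b * l2norm (B \<xi>)"
      unfolding oplin_def using l2_lin[OF bounded_op_l2D[OF A x] bounded_op_l2D[OF B x]] by blast
    also have "\<dots> \<le> cmod a * (opnorm A * l2norm \<xi>) + cmod b * (opnorm B * l2norm \<xi>)"
      by (intro add_mono mult_left_mono op_bound A B x) auto
    finally show ?thesis by (simp add: algebra_simps)
  qed
next
  fix \<xi> \<eta> :: "'g \<Rightarrow> complex" and c d assume x: "\<xi> \<in> l2" and y: "\<eta> \<in> l2"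
  show "oplin a A b B (\<lambda>h. c * \<xi> h + d * \<eta> h) = (\<lambda>h. c * oplin a A b B \<xi> h + d * oplin a A b B \<eta> h)"
    unfolding oplin_def using bounded_op_linD[OF A x y] bounded_op_linD[OF B x y]
    by (simp add: algebra_simps)
qed

lemma opnorm_oplin:
  fixes A B :: "'g op"
  assumes A: "bounded_op A" and B: "bounded_op B"
  shows "opnorm (oplin a A b B) \<le> cmod a * opnorm A + cmod b * opnorm B"
proof (rule opnorm_le)
  show "0 \<le> cmod a * opnorm A + cmod b * opnorm B" using opnorm_nonneg[OF A] opnorm_nonneg[OF B] by simp
  fix \<xi> :: "'g \<Rightarrow> complex" assume x: "\<xi> \<in> l2"
  have "l2norm (oplin a A b B \<xi>) \<le> cmod a * l2norm (A \<xi>) + cmod b * l2norm (B \<xi>)"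
    unfolding oplin_def using l2_lin[OF bounded_op_l2D[OF A x] bounded_op_l2D[OF B x]] by blast
  also have "\<dots> \<le> cmod a * (opnorm A * l2norm \<xi>) + cmod b * (opnorm B * l2norm \<xi>)"
    by (intro add_mono mult_left_mono op_bound A B x) auto
  finally show "l2norm (oplin a A b B \<xi>) \<le> (cmod a * opnorm A + cmod b * opnorm B) * l2norm \<xi>"
    by (simp add: algebra_simps)
qed

lemma bounded_op_diff: "bounded_op A \<Longrightarrow> bounded_op B \<Longrightarrow> bounded_op (op_diff A B)"
  by (simp add: op_diff_oplin bounded_oplin)

lemma opnorm_diff_le: "bounded_op A \<Longrightarrow> bounded_op B \<Longrightarrow> opnorm (op_diff A B) \<le> opnorm A + opnorm B"
  using opnorm_oplin[of A B 1 "-1"] by (simp add: op_diff_oplin)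

lemma opnorm_diff_sym: "opnorm (op_diff A B) = opnorm (op_diff B A)"
proof -
  have "l2norm (op_diff A B \<xi>) = l2norm (op_diff B A \<xi>)" for \<xi>
    by (rule l2norm_cong) (simp add: op_diff_def norm_minus_commute)
  then show ?thesis unfolding opnorm_def by simp
qed

lemma opnorm_tri:
  assumes "bounded_op A" "bounded_op B" "bounded_op C"
  shows "opnorm (op_diff A C) \<le> opnorm (op_diff A B) + opnorm (op_diff B C)"
proof -
  have "op_diff A C = oplin 1 (op_diff A B) 1 (op_diff B C)"
    by (simp add: op_diff_def oplin_def fun_eq_iff)
  then show ?thesis using opnorm_oplin[OF bounded_op_diff[OF assms(1,2)] bounded_op_diff[OF assms(2,3)], of 1 1] by simp
qed

lemma opnorm_diff_self: "opnorm (op_diff A A) = 0"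
proof -
  have "{l2norm (op_diff A A \<xi>) |\<xi>. \<xi> \<in> l2 \<and> l2norm \<xi> \<le> 1} = {0}"
    using l2_zero l2norm_zero by (auto simp: op_diff_def)
  then show ?thesis by (simp add: opnorm_def)
qed

lemma opnorm_eq0D:
  assumes "bounded_op T" "opnorm T \<le> 0" "\<xi> \<in> l2"
  shows "T \<xi> = (\<lambda>h. 0)"
proof -
  have "l2norm (T \<xi>) \<le> 0" using op_bound[OF assms(1,3)] assms(2) l2norm_nonneg[of \<xi>]
    by (meson mult_nonpos_nonneg order_trans)
  then show ?thesis using l2norm_eq0[OF bounded_op_l2D[OF assms(1,3)]] l2norm_nonneg[of "T \<xi>"] by simp
qed

lemma fhat_bound: "bounded_op x \<Longrightarrow> cmod (fhat x g) \<le> opnorm x"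
  unfolding fhat_def using op_bound[of x "delta 1"] l2_point[of "x (delta 1)" g] delta_l2 delta_norm bounded_op_l2D
  by (metis mult.right_neutral order_trans)

lemma fhat_diff: "fhat (op_diff x y) g = fhat x g - fhat y g"
  by (simp add: fhat_def op_diff_def)

lemma fhat_diff_bound: "bounded_op x \<Longrightarrow> bounded_op y \<Longrightarrow> cmod (fhat x g - fhat y g) \<le> opnorm (op_diff x y)"
  using fhat_bound[OF bounded_op_diff, of x y g] by (simp add: fhat_diff)

section \<open>Lambda and lincomb\<close>

lemma cocycle_norm: "cocycle2 \<sigma> \<Longrightarrow> cmod (\<sigma> g h) = 1"
  unfolding cocycle2_def by blast

lemma Lambda_l2:
  assumes s: "cocycle2 \<sigma>" and x: "\<xi> \<in> l2"
  shows "Lambda \<sigma> g \<xi> \<in> l2 \<and> l2norm (Lambda \<sigma> g \<xi>) = l2norm \<xi>"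
proof -
  have e: "(\<lambda>h. (cmod (Lambda \<sigma> g \<xi> h))\<^sup>2) = (\<lambda>h. (\<lambda>k. (cmod (\<xi> k))\<^sup>2) (inverse g * h))"
    by (simp add: Lambda_def norm_mult cocycle_norm[OF s])
  have sm: "(\<lambda>h. (cmod (\<xi> h))\<^sup>2) summable_on UNIV" using x by (simp add: l2_def)
  have "(\<lambda>h. (cmod (Lambda \<sigma> g \<xi> h))\<^sup>2) summable_on UNIV"
    unfolding e using summable_on_reindex_bij_betw[OF mg_bij, of "\<lambda>k. (cmod (\<xi> k))\<^sup>2" g] sm by simp
  moreover have "(\<Sum>\<^sub>\<infinity>h. (cmod (Lambda \<sigma> g \<xi> h))\<^sup>2) = (\<Sum>\<^sub>\<infinity>h. (cmod (\<xi> h))\<^sup>2)"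
    unfolding e using infsum_reindex_bij_betw[OF mg_bij, of "\<lambda>k. (cmod (\<xi> k))\<^sup>2" g] by simp
  ultimately show ?thesis by (simp add: l2_def l2norm_def)
qed

lemma lincomb_l2:
  assumes s: "cocycle2 \<sigma>" and x: "\<xi> \<in> l2" and F: "finite F"
  shows "lincomb \<sigma> c F \<xi> \<in> l2 \<and> l2norm (lincomb \<sigma> c F \<xi>) \<le> (\<Sum>g\<in>F. cmod (c g)) * l2norm \<xi>"
  using F
proof (induction F)
  case empty
  then show ?case by (simp add: lincomb_def l2_zero l2norm_zero)
next
  case (insert g F)
  have e: "lincomb \<sigma> c (insert g F) \<xi> = (\<lambda>h. c g * Lambda \<sigma> g \<xi> h + 1 * lincomb \<sigma> c F \<xi> h)"
    using insert by (simp add: lincomb_def)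
  have "lincomb \<sigma> c (insert g F) \<xi> \<in> l2 \<and> l2norm (lincomb \<sigma> c (insert g F) \<xi>) \<le> cmod (c g) * l2norm (Lambda \<sigma> g \<xi>) + cmod 1 * l2norm (lincomb \<sigma> c F \<xi>)"
    unfolding e by (rule l2_lin) (use Lambda_l2[OF s x] insert in auto)
  then show ?case using insert Lambda_l2[OF s x, of g]
    by (auto simp: distrib_right)
qed

lemma lincomb_lin:
  "lincomb \<sigma> c F (\<lambda>h. a * \<xi> h + b * \<eta> h) = (\<lambda>h. a * lincomb \<sigma> c F \<xi> h + b * lincomb \<sigma> c F \<eta> h)"
  by (simp add: lincomb_def Lambda_def sum_distrib_left sum.distrib algebra_simps)

lemma bounded_lincomb: "cocycle2 \<sigma> \<Longrightarrow> finite F \<Longrightarrow> bounded_op (lincomb \<sigma> c F)"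
  by (rule bounded_opI[where C="\<Sum>g\<in>F. cmod (c g)"]) (auto simp: lincomb_l2 lincomb_lin)

lemma opnorm_lincomb: "cocycle2 \<sigma> \<Longrightarrow> finite F \<Longrightarrow> opnorm (lincomb \<sigma> c F) \<le> (\<Sum>g\<in>F. cmod (c g))"
  by (rule opnorm_le) (auto simp: lincomb_l2 sum_nonneg)

lemma lincomb_cong: "(\<And>g. g \<in> F \<Longrightarrow> c g = d g) \<Longrightarrow> lincomb \<sigma> c F = lincomb \<sigma> d F"
  unfolding lincomb_def by (simp cong: sum.cong)

lemma lincomb_ext:
  assumes "finite E" "F \<subseteq> E"
  shows "lincomb \<sigma> c F = lincomb \<sigma> (\<lambda>g. if g \<in> F then c g else 0) E"
  unfolding lincomb_def
  by (intro ext sum.mono_neutral_cong_left) (use assms in auto)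

lemma lincomb_oplin:
  assumes "finite F" "finite E"
  shows "oplin a (lincomb \<sigma> c F) b (lincomb \<sigma> d E)
     = lincomb \<sigma> (\<lambda>g. a * (if g \<in> F then c g else 0) + b * (if g \<in> E then d g else 0)) (F \<union> E)"
proof -
  have 1: "lincomb \<sigma> c F = lincomb \<sigma> (\<lambda>g. if g \<in> F then c g else 0) (F \<union> E)"
    and 2: "lincomb \<sigma> d E = lincomb \<sigma> (\<lambda>g. if g \<in> E then d g else 0) (F \<union> E)"
    using assms by (auto intro: lincomb_ext)
  show ?thesis unfolding 1 2
    by (simp add: oplin_def lincomb_def sum_distrib_left sum.distrib algebra_simps)
qed

lemma fhat_lincomb:
  assumes s: "cocycle2 \<sigma>" and F: "finite F"
  shows "fhat (lincomb \<sigma> c F) g = (if g \<in> F then c g else 0)"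
proof -
  have "fhat (lincomb \<sigma> c F) g = (\<Sum>k\<in>F. if k = g then c g else 0)"
    unfolding fhat_def lincomb_def Lambda_def delta_def
    by (rule sum.cong) (use s in \<open>auto simp: mg_inv_mult_eq1 cocycle2_def mg_cancel_left mgroup_left_inverse\<close>)
  then show ?thesis using F by simp
qed

lemma CredD:
  assumes "x \<in> Cred \<sigma>" "\<epsilon> > 0"
  shows "\<exists>c F. finite F \<and> opnorm (op_diff x (lincomb \<sigma> c F)) < \<epsilon>"
  using assms unfolding Cred_def CG_def by blast

lemma Cred_bounded: "x \<in> Cred \<sigma> \<Longrightarrow> bounded_op x"
  unfolding Cred_def by blast

lemma lincomb_CG: "finite F \<Longrightarrow> lincomb \<sigma> c F \<in> CG \<sigma>"
  unfolding CG_def by blast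

lemma lincomb_Cred:
  assumes "cocycle2 \<sigma>" "finite F" shows "lincomb \<sigma> c F \<in> Cred \<sigma>"
proof -
  have "\<forall>\<epsilon>>0. \<exists>y\<in>CG \<sigma>. opnorm (op_diff (lincomb \<sigma> c F) y) < \<epsilon>"
    using lincomb_CG[OF assms(2)] opnorm_diff_self by metis
  then show ?thesis unfolding Cred_def using bounded_lincomb[OF assms] by blast
qed

lemma Cred_oplin:
  assumes s: "cocycle2 \<sigma>" and x: "x \<in> Cred \<sigma>" and y: "y \<in> Cred \<sigma>"
  shows "oplin a x b y \<in> Cred \<sigma>"
proof -
  have bx: "bounded_op x" and by': "bounded_op y" using x y Cred_bounded by auto
  have "\<exists>z\<in>CG \<sigma>. opnorm (op_diff (oplin a x b y) z) < \<epsilon>" if e: "\<epsilon> > 0" for \<epsilon>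
  proof -
    define k where "k = cmod a + cmod b + 1"
    have k: "k > 0" by (simp add: k_def add_nonneg_pos)
    obtain c F where F: "finite F" and c: "opnorm (op_diff x (lincomb \<sigma> c F)) < \<epsilon> / k"
      using CredD[OF x, of "\<epsilon>/k"] e k by auto
    obtain d E where E: "finite E" and d: "opnorm (op_diff y (lincomb \<sigma> d E)) < \<epsilon> / k"
      using CredD[OF y, of "\<epsilon>/k"] e k by auto
    have eq: "op_diff (oplin a x b y) (oplin a (lincomb \<sigma> c F) b (lincomb \<sigma> d E))
        = oplin a (op_diff x (lincomb \<sigma> c F)) b (op_diff y (lincomb \<sigma> d E))"
      by (simp add: op_diff_def oplin_def fun_eq_iff algebra_simps)
    have "opnorm (op_diff (oplin a x b y) (oplin a (lincomb \<sigma> c F) b (lincomb \<sigma> d E)))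
        \<le> cmod a * opnorm (op_diff x (lincomb \<sigma> c F)) + cmod b * opnorm (op_diff y (lincomb \<sigma> d E))"
      unfolding eq by (intro opnorm_oplin bounded_op_diff bx by' bounded_lincomb s F E)
    also have "\<dots> \<le> cmod a * (\<epsilon>/k) + cmod b * (\<epsilon>/k)"
      using c d by (intro add_mono mult_left_mono) auto
    also have "\<dots> < \<epsilon>"
    proof -
      have "cmod a * (\<epsilon>/k) + cmod b * (\<epsilon>/k) = (k - 1) * (\<epsilon> / k)" unfolding k_def by (simp add: add_divide_distrib[symmetric] distrib_right)
      also have "\<dots> < \<epsilon>" using k e by (simp add: field_simps)
      finally show ?thesis .
    qed
    finally have "opnorm (op_diff (oplin a x b y) (oplin a (lincomb \<sigma> c F) b (lincomb \<sigma> d E))) < \<epsilon>" .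
    moreover have "oplin a (lincomb \<sigma> c F) b (lincomb \<sigma> d E) \<in> CG \<sigma>"
      unfolding lincomb_oplin[OF F E] using F E by (intro lincomb_CG) simp
    ultimately show ?thesis by blast
  qed
  then show ?thesis unfolding Cred_def using bounded_oplin[OF bx by'] by blast
qed

lemma Cred_cong:
  assumes "x \<in> Cred \<sigma>" "\<And>\<xi>. \<xi> \<in> l2 \<Longrightarrow> x \<xi> = y \<xi>"
  shows "y \<in> Cred \<sigma>"
proof -
  have "opnorm (op_diff y z) = opnorm (op_diff x z)" for z
    by (rule opnorm_cong) (simp add: op_diff_def assms(2))
  moreover have "bounded_op y" using bounded_op_cong[of x y] assms Cred_bounded by blast
  ultimately show ?thesis using assms(1) unfolding Cred_def by simp
qed

lemma op_complete:
  fixes T :: "nat \<Rightarrow> 'g op"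
  assumes bT: "\<And>n. bounded_op (T n)"
    and cau: "\<And>\<epsilon>. \<epsilon> > 0 \<Longrightarrow> \<exists>N. \<forall>m\<ge>N. \<forall>n\<ge>N. opnorm (op_diff (T m) (T n)) < \<epsilon>"
  shows "\<exists>L. bounded_op L \<and> (\<forall>\<epsilon>>0. \<exists>N. \<forall>n\<ge>N. opnorm (op_diff (T n) L) \<le> \<epsilon>)"
proof -
  define L :: "'g op" where "L \<xi> h = lim (\<lambda>n. T n \<xi> h)" for \<xi> h
  have conv: "(\<lambda>n. T n \<xi> h) \<longlonglongrightarrow> L \<xi> h" if x: "\<xi> \<in> l2" for \<xi> h
  proof -
    have "Cauchy (\<lambda>n. T n \<xi> h)"
    proof (rule metric_CauchyI)
      fix e :: real assume e: "e > 0"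
      define \<epsilon> where "\<epsilon> = e / (l2norm \<xi> + 1)"
      have np: "l2norm \<xi> + 1 > 0" using l2norm_nonneg[of \<xi>] by linarith
      have ep: "\<epsilon> > 0" unfolding \<epsilon>_def using e np by (rule divide_pos_pos)
      have ee: "\<epsilon> * (l2norm \<xi> + 1) = e" unfolding \<epsilon>_def using np by simp
      obtain N where N: "\<And>m n. m \<ge> N \<Longrightarrow> n \<ge> N \<Longrightarrow> opnorm (op_diff (T m) (T n)) < \<epsilon>"
        using cau[OF ep] by blast
      have "dist (T m \<xi> h) (T n \<xi> h) < e" if "m \<ge> N" "n \<ge> N" for m n
      proof -
        have "dist (T m \<xi> h) (T n \<xi> h) = cmod (op_diff (T m) (T n) \<xi> h)"
          by (simp add: dist_norm op_diff_def)
        also have "\<dots> \<le> l2norm (op_diff (T m) (T n) \<xi>)"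
          by (rule l2_point[OF bounded_op_l2D[OF bounded_op_diff[OF bT bT] x]])
        also have "\<dots> \<le> opnorm (op_diff (T m) (T n)) * l2norm \<xi>"
          by (intro op_bound bounded_op_diff bT x)
        also have "\<dots> \<le> \<epsilon> * l2norm \<xi>"
          using N[OF that] l2norm_nonneg[of \<xi>] by (intro mult_right_mono) auto
        also have "\<dots> < \<epsilon> * (l2norm \<xi> + 1)"
          using ep by (intro mult_strict_left_mono) auto
        also have "\<dots> = e" by (rule ee)
        finally show ?thesis .
      qed
      then show "\<exists>M. \<forall>m\<ge>M. \<forall>n\<ge>M. dist (T m \<xi> h) (T n \<xi> h) < e" by blast
    qed
    then have "convergent (\<lambda>n. T n \<xi> h)" by (rule Cauchy_convergent)
    then show ?thesis unfolding L_def by (rule convergent_LIMSEQ_iff[THEN iffD1])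
  qed
  have tail: "\<exists>N. \<forall>n\<ge>N. \<forall>\<xi>\<in>l2. op_diff (T n) L \<xi> \<in> l2 \<and> l2norm (op_diff (T n) L \<xi>) \<le> \<epsilon> * l2norm \<xi>"
    if ep: "\<epsilon> > 0" for \<epsilon>
  proof -
    obtain N where N: "\<And>m n. m \<ge> N \<Longrightarrow> n \<ge> N \<Longrightarrow> opnorm (op_diff (T m) (T n)) < \<epsilon>"
      using cau[OF ep] by blast
    have "op_diff (T n) L \<xi> \<in> l2 \<and> l2norm (op_diff (T n) L \<xi>) \<le> \<epsilon> * l2norm \<xi>"
      if n: "n \<ge> N" and x: "\<xi> \<in> l2" for n \<xi>
    proof (rule l2_fatou[where \<zeta>="\<lambda>m. op_diff (T n) (T m) \<xi>" and N=N])
      show "(\<lambda>m. op_diff (T n) (T m) \<xi> h) \<longlonglongrightarrow> op_diff (T n) L \<xi> h" for h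
        unfolding op_diff_def by (intro tendsto_intros conv x)
      fix m assume m: "m \<ge> N"
      show "op_diff (T n) (T m) \<xi> \<in> l2 \<and> l2norm (op_diff (T n) (T m) \<xi>) \<le> \<epsilon> * l2norm \<xi>"
      proof
        show "op_diff (T n) (T m) \<xi> \<in> l2" by (rule bounded_op_l2D[OF bounded_op_diff[OF bT bT] x])
        have "l2norm (op_diff (T n) (T m) \<xi>) \<le> opnorm (op_diff (T n) (T m)) * l2norm \<xi>"
          by (intro op_bound bounded_op_diff bT x)
        also have "\<dots> \<le> \<epsilon> * l2norm \<xi>"
          using N[OF n m] l2norm_nonneg[of \<xi>] by (intro mult_right_mono) auto
        finally show "l2norm (op_diff (T n) (T m) \<xi>) \<le> \<epsilon> * l2norm \<xi>" .
      qed
    qed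
    then show ?thesis by blast
  qed
  obtain N1 where N1: "\<And>n \<xi>. n \<ge> N1 \<Longrightarrow> \<xi> \<in> l2 \<Longrightarrow> op_diff (T n) L \<xi> \<in> l2 \<and> l2norm (op_diff (T n) L \<xi>) \<le> 1 * l2norm \<xi>"
    using tail[of 1] by auto
  have Lrep: "L \<xi> = (\<lambda>h. 1 * T N1 \<xi> h + (-1) * op_diff (T N1) L \<xi> h)" for \<xi>
    by (simp add: op_diff_def)
  have bL: "bounded_op L"
  proof (rule bounded_opI[where C="opnorm (T N1) + 1"])
    fix \<xi> :: "'g \<Rightarrow> complex" assume x: "\<xi> \<in> l2"
    have l: "L \<xi> \<in> l2 \<and> l2norm (L \<xi>) \<le> cmod 1 * l2norm (T N1 \<xi>) + cmod (-1) * l2norm (op_diff (T N1) L \<xi>)"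
      unfolding Lrep[of \<xi>] by (rule l2_lin) (use N1[of N1 \<xi>] x bounded_op_l2D[OF bT x] in auto)
    then show "L \<xi> \<in> l2" by blast
    have "l2norm (L \<xi>) \<le> opnorm (T N1) * l2norm \<xi> + 1 * l2norm \<xi>"
      using l N1[of N1 \<xi>] x op_bound[OF bT x, of N1] by simp
    then show "l2norm (L \<xi>) \<le> (opnorm (T N1) + 1) * l2norm \<xi>" by (simp add: algebra_simps)
  next
    fix \<xi> \<eta> :: "'g \<Rightarrow> complex" and a b assume x: "\<xi> \<in> l2" and y: "\<eta> \<in> l2"
    have "(\<lambda>h. a * \<xi> h + b * \<eta> h) \<in> l2" using l2_lin[OF x y] by blast
    show "L (\<lambda>h. a * \<xi> h + b * \<eta> h) = (\<lambda>h. a * L \<xi> h + b * L \<eta> h)"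
    proof
      fix h
      have "(\<lambda>n. T n (\<lambda>h. a * \<xi> h + b * \<eta> h) h) \<longlonglongrightarrow> L (\<lambda>h. a * \<xi> h + b * \<eta> h) h"
        by (rule conv) fact
      moreover have "(\<lambda>n. T n (\<lambda>h. a * \<xi> h + b * \<eta> h) h) = (\<lambda>n. a * T n \<xi> h + b * T n \<eta> h)"
        using bounded_op_linD[OF bT x y] by simp
      moreover have "(\<lambda>n. a * T n \<xi> h + b * T n \<eta> h) \<longlonglongrightarrow> a * L \<xi> h + b * L \<eta> h"
        by (intro tendsto_intros conv x y)
      ultimately show "L (\<lambda>h. a * \<xi> h + b * \<eta> h) h = a * L \<xi> h + b * L \<eta> h"
        using LIMSEQ_unique by metis
    qed
  qed
  have "\<exists>N. \<forall>n\<ge>N. opnorm (op_diff (T n) L) \<le> \<epsilon>" if ep: "\<epsilon> > 0" for \<epsilon>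
  proof -
    obtain N where N: "\<And>n \<xi>. n \<ge> N \<Longrightarrow> \<xi> \<in> l2 \<Longrightarrow> l2norm (op_diff (T n) L \<xi>) \<le> \<epsilon> * l2norm \<xi>"
      using tail[OF ep] by blast
    have "opnorm (op_diff (T n) L) \<le> \<epsilon>" if n: "n \<ge> N" for n
      by (rule opnorm_le) (use ep N[OF n] in auto)
    then show ?thesis by blast
  qed
  with bL show ?thesis by blast
qed

lemma MA_C:
  assumes s: "cocycle2 \<sigma>" and m: "\<phi> \<in> MA \<sigma>"
  obtains C where "C \<ge> 0" "\<And>c F. finite F \<Longrightarrow> opnorm (lincomb \<sigma> (\<lambda>g. \<phi> g * c g) F) \<le> C * opnorm (lincomb \<sigma> c F)"
proof -
  obtain C where C: "\<And>c F. finite F \<Longrightarrow> opnorm (lincomb \<sigma> (\<lambda>g. \<phi> g * c g) F) \<le> C * opnorm (lincomb \<sigma> c F)"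
    using m unfolding MA_def by blast
  show thesis
  proof (rule that[of "max C 0"])
    fix c and F :: "'a set" assume F: "finite F"
    have "C * opnorm (lincomb \<sigma> c F) \<le> max C 0 * opnorm (lincomb \<sigma> c F)"
      using opnorm_nonneg[OF bounded_lincomb[OF s F]] by (intro mult_right_mono) auto
    then show "opnorm (lincomb \<sigma> (\<lambda>g. \<phi> g * c g) F) \<le> max C 0 * opnorm (lincomb \<sigma> c F)"
      using C[OF F, of c] by linarith
  qed simp
qed

lemma MA_diff:
  assumes Cb: "\<And>c F. finite F \<Longrightarrow> opnorm (lincomb \<sigma> (\<lambda>g. \<phi> g * c g) F) \<le> C * opnorm (lincomb \<sigma> c F)"
    and F: "finite F" and E: "finite E"
  shows "opnorm (op_diff (lincomb \<sigma> (\<lambda>g. \<phi> g * c g) F) (lincomb \<sigma> (\<lambda>g. \<phi> g * d g) E))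
     \<le> C * opnorm (op_diff (lincomb \<sigma> c F) (lincomb \<sigma> d E))"
proof -
  define e where "e g = 1 * (if g \<in> F then c g else 0) + (-1) * (if g \<in> E then d g else 0)" for g
  have 1: "op_diff (lincomb \<sigma> c F) (lincomb \<sigma> d E) = lincomb \<sigma> e (F \<union> E)"
    unfolding op_diff_oplin lincomb_oplin[OF F E] e_def ..
  have 2: "op_diff (lincomb \<sigma> (\<lambda>g. \<phi> g * c g) F) (lincomb \<sigma> (\<lambda>g. \<phi> g * d g) E) = lincomb \<sigma> (\<lambda>g. \<phi> g * e g) (F \<union> E)"
    unfolding op_diff_oplin lincomb_oplin[OF F E] e_def by (rule lincomb_cong) (auto simp: algebra_simps)
  show ?thesis unfolding 1 2 using F E by (intro Cb) simp
qed

lemma Mext_exists: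
  fixes \<sigma> :: "'g::mgroup \<Rightarrow> 'g \<Rightarrow> complex"
  assumes s: "cocycle2 \<sigma>" and m: "\<phi> \<in> MA \<sigma>" and x: "x \<in> Cred \<sigma>"
  shows "\<exists>T. is_Mext \<sigma> \<phi> x T"
proof -
  obtain C where C0: "C \<ge> 0" and Cb: "\<And>c F. finite F \<Longrightarrow> opnorm (lincomb \<sigma> (\<lambda>g. \<phi> g * c g) F) \<le> C * opnorm (lincomb \<sigma> c F)"
    using MA_C[OF s m] by blast
  have bx: "bounded_op x" using x by (rule Cred_bounded)
  have "\<forall>n. \<exists>c F. finite F \<and> opnorm (op_diff x (lincomb \<sigma> c F)) < inverse (real (Suc n))"
    using CredD[OF x] by simp
  then obtain cs Fs where cF: "\<And>n. finite (Fs n)" "\<And>n. opnorm (op_diff x (lincomb \<sigma> (cs n) (Fs n))) < inverse (real (Suc n))"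
    by metis
  define l where "l n = lincomb \<sigma> (cs n) (Fs n)" for n
  define Y where "Y n = lincomb \<sigma> (\<lambda>g. \<phi> g * cs n g) (Fs n)" for n
  have bl: "bounded_op (l n)" for n unfolding l_def by (rule bounded_lincomb[OF s cF(1)])
  have bY: "bounded_op (Y n)" for n unfolding Y_def by (rule bounded_lincomb[OF s cF(1)])
  have lx: "opnorm (op_diff (l n) x) < inverse (real (Suc n))" for n
    using cF(2)[of n] opnorm_diff_sym unfolding l_def by metis
  have inv_mono: "inverse (real (Suc n)) \<le> inverse (real (Suc N))" if "N \<le> n" for n N
    using that by (simp add: field_simps)
  have Yl: "opnorm (op_diff (Y m) (Y n)) \<le> C * (inverse (real (Suc m)) + inverse (real (Suc n)))" for m n
  proof -
    have "opnorm (op_diff (Y m) (Y n)) \<le> C * opnorm (op_diff (l m) (l n))"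
      unfolding Y_def l_def by (rule MA_diff[OF Cb cF(1) cF(1)])
    also have "\<dots> \<le> C * (opnorm (op_diff (l m) x) + opnorm (op_diff x (l n)))"
      using C0 opnorm_tri[OF bl bx bl] by (intro mult_left_mono) auto
    also have "\<dots> \<le> C * (inverse (real (Suc m)) + inverse (real (Suc n)))"
      using C0 lx[of m] lx[of n] opnorm_diff_sym[of x "l n"] by (intro mult_left_mono) auto
    finally show ?thesis .
  qed
  have "\<exists>N. \<forall>m\<ge>N. \<forall>n\<ge>N. opnorm (op_diff (Y m) (Y n)) < \<epsilon>" if e: "\<epsilon> > 0" for \<epsilon>
  proof -
    have "\<epsilon> / (2 * (C + 1)) > 0" using e C0 by simp
    then obtain N where N: "inverse (real (Suc N)) < \<epsilon> / (2 * (C + 1))"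
      using reals_Archimedean by blast
    have "opnorm (op_diff (Y m) (Y n)) < \<epsilon>" if "m \<ge> N" "n \<ge> N" for m n
    proof -
      have "C * (inverse (real (Suc m)) + inverse (real (Suc n))) \<le> (C + 1) * (2 * inverse (real (Suc N)))"
      proof -
        have "inverse (real (Suc m)) + inverse (real (Suc n)) \<le> 2 * inverse (real (Suc N))"
          using inv_mono[OF that(1)] inv_mono[OF that(2)] by linarith
        moreover have "0 \<le> inverse (real (Suc m)) + inverse (real (Suc n))" by simp
        ultimately show ?thesis using C0 by (intro mult_mono) auto
      qed
      also have "\<dots> < (C + 1) * (2 * (\<epsilon> / (2 * (C + 1))))"
        using N C0 by (intro mult_strict_left_mono) auto
      also have "\<dots> = \<epsilon>" using C0 by (simp add: field_simps)
      finally show ?thesis using Yl[of m n] by linarith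
    qed
    then show ?thesis by blast
  qed
  then obtain L where bL: "bounded_op L" and YL: "\<And>\<epsilon>. \<epsilon> > 0 \<Longrightarrow> \<exists>N. \<forall>n\<ge>N. opnorm (op_diff (Y n) L) \<le> \<epsilon>"
    using op_complete[of Y, OF bY] by metis
  have "is_Mext \<sigma> \<phi> x L"
    unfolding is_Mext_def
  proof (intro conjI bL allI impI)
    fix \<epsilon> :: real assume e: "\<epsilon> > 0"
    define \<delta> where "\<delta> = \<epsilon> / (4 * (C + 1))"
    have d: "\<delta> > 0" using e C0 by (simp add: \<delta>_def)
    obtain N1 where N1: "\<And>n. n \<ge> N1 \<Longrightarrow> opnorm (op_diff (Y n) L) \<le> \<epsilon> / 4"
      using YL[of "\<epsilon>/4"] e by auto
    obtain N2 where N2: "inverse (real (Suc N2)) < \<delta>"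
      using reals_Archimedean d by blast
    define n where "n = max N1 N2"
    have n1: "opnorm (op_diff (Y n) L) \<le> \<epsilon> / 4" using N1 by (simp add: n_def)
    have n2: "inverse (real (Suc n)) < \<delta>" using N2 inv_mono[of N2 n] unfolding n_def by linarith
    have "opnorm (op_diff L (lincomb \<sigma> (\<lambda>g. \<phi> g * c g) F)) < \<epsilon>"
      if F: "finite F" and cl: "opnorm (op_diff x (lincomb \<sigma> c F)) < \<delta>" for c F
    proof -
      have bl': "bounded_op (lincomb \<sigma> c F)" "bounded_op (lincomb \<sigma> (\<lambda>g. \<phi> g * c g) F)"
        using bounded_lincomb[OF s F] by auto
      have "opnorm (op_diff (Y n) (lincomb \<sigma> (\<lambda>g. \<phi> g * c g) F)) \<le> C * opnorm (op_diff (l n) (lincomb \<sigma> c F))"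
        unfolding Y_def l_def by (rule MA_diff[OF Cb cF(1) F])
      also have "\<dots> \<le> C * (opnorm (op_diff (l n) x) + opnorm (op_diff x (lincomb \<sigma> c F)))"
        using C0 opnorm_tri[OF bl bx bl'(1)] by (intro mult_left_mono) auto
      also have "\<dots> \<le> C * (\<delta> + \<delta>)"
        using C0 lx[of n] n2 cl by (intro mult_left_mono) auto
      also have "\<dots> \<le> \<epsilon> / 2"
      proof -
        have "C * (\<delta> + \<delta>) \<le> (C + 1) * (2 * \<delta>)" using C0 d by (intro mult_mono) auto
        also have "\<dots> = \<epsilon> / 2" using C0 by (simp add: \<delta>_def field_simps)
        finally show ?thesis .
      qed
      finally have a: "opnorm (op_diff (Y n) (lincomb \<sigma> (\<lambda>g. \<phi> g * c g) F)) \<le> \<epsilon> / 2" .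
      have "opnorm (op_diff L (lincomb \<sigma> (\<lambda>g. \<phi> g * c g) F))
          \<le> opnorm (op_diff L (Y n)) + opnorm (op_diff (Y n) (lincomb \<sigma> (\<lambda>g. \<phi> g * c g) F))"
        by (rule opnorm_tri[OF bL bY bl'(2)])
      also have "\<dots> \<le> \<epsilon> / 4 + \<epsilon> / 2" using n1 a opnorm_diff_sym[of L "Y n"] by linarith
      also have "\<dots> < \<epsilon>" using e by simp
      finally show ?thesis .
    qed
    then show "\<exists>\<delta>>0. \<forall>c F. finite F \<and> opnorm (op_diff x (lincomb \<sigma> c F)) < \<delta> \<longrightarrow>
        opnorm (op_diff L (lincomb \<sigma> (\<lambda>g. \<phi> g * c g) F)) < \<epsilon>"
      using d by blast
  qed
  then show ?thesis by blast
qed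

lemma Mext_unique:
  assumes s: "cocycle2 \<sigma>" and x: "x \<in> Cred \<sigma>"
    and T1: "is_Mext \<sigma> \<phi> x T1" and T2: "is_Mext \<sigma> \<phi> x T2"
  shows "opnorm (op_diff T1 T2) = 0"
proof -
  have b1: "bounded_op T1" and b2: "bounded_op T2" using T1 T2 unfolding is_Mext_def by auto
  have "opnorm (op_diff T1 T2) \<le> 0 + \<epsilon>" if e: "\<epsilon> > 0" for \<epsilon>
  proof -
    obtain \<delta>1 where d1: "\<delta>1 > 0" "\<And>c F. finite F \<Longrightarrow> opnorm (op_diff x (lincomb \<sigma> c F)) < \<delta>1 \<Longrightarrow>
        opnorm (op_diff T1 (lincomb \<sigma> (\<lambda>g. \<phi> g * c g) F)) < \<epsilon>/2"
      using T1 e unfolding is_Mext_def by (meson half_gt_zero)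
    obtain \<delta>2 where d2: "\<delta>2 > 0" "\<And>c F. finite F \<Longrightarrow> opnorm (op_diff x (lincomb \<sigma> c F)) < \<delta>2 \<Longrightarrow>
        opnorm (op_diff T2 (lincomb \<sigma> (\<lambda>g. \<phi> g * c g) F)) < \<epsilon>/2"
      using T2 e unfolding is_Mext_def by (meson half_gt_zero)
    obtain c F where F: "finite F" and cl: "opnorm (op_diff x (lincomb \<sigma> c F)) < min \<delta>1 \<delta>2"
      using CredD[OF x, of "min \<delta>1 \<delta>2"] d1 d2 by auto
    have "opnorm (op_diff T1 T2) \<le> opnorm (op_diff T1 (lincomb \<sigma> (\<lambda>g. \<phi> g * c g) F)) + opnorm (op_diff (lincomb \<sigma> (\<lambda>g. \<phi> g * c g) F) T2)"
      by (rule opnorm_tri[OF b1 bounded_lincomb[OF s F] b2])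
    also have "\<dots> < \<epsilon>/2 + \<epsilon>/2"
      using d1(2)[OF F] d2(2)[OF F] cl opnorm_diff_sym[of T2] by (intro add_strict_mono) auto
    finally show ?thesis by simp
  qed
  then have "opnorm (op_diff T1 T2) \<le> 0" by (rule field_le_epsilon)
  with opnorm_nonneg[OF bounded_op_diff[OF b1 b2]] show ?thesis by simp
qed

lemma Mext_eq:
  assumes s: "cocycle2 \<sigma>" and x: "x \<in> Cred \<sigma>"
    and T1: "is_Mext \<sigma> \<phi> x T1" and T2: "is_Mext \<sigma> \<phi> x T2" and xi: "\<xi> \<in> l2"
  shows "T1 \<xi> = T2 \<xi>"
proof -
  have b1: "bounded_op T1" and b2: "bounded_op T2" using T1 T2 unfolding is_Mext_def by auto
  have "op_diff T1 T2 \<xi> = (\<lambda>h. 0)"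
    using opnorm_eq0D[OF bounded_op_diff[OF b1 b2] _ xi] Mext_unique[OF s x T1 T2] by simp
  then show ?thesis by (simp add: op_diff_def fun_eq_iff)
qed

lemma isMext_Cred:
  assumes s: "cocycle2 \<sigma>" and x: "x \<in> Cred \<sigma>" and T: "is_Mext \<sigma> \<phi> x T"
  shows "T \<in> Cred \<sigma>"
proof -
  have "\<exists>y\<in>CG \<sigma>. opnorm (op_diff T y) < \<epsilon>" if e: "\<epsilon> > 0" for \<epsilon>
  proof -
    obtain \<delta> where d: "\<delta> > 0" "\<And>c F. finite F \<Longrightarrow> opnorm (op_diff x (lincomb \<sigma> c F)) < \<delta> \<Longrightarrow>
        opnorm (op_diff T (lincomb \<sigma> (\<lambda>g. \<phi> g * c g) F)) < \<epsilon>"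
      using T e unfolding is_Mext_def by meson
    obtain c F where F: "finite F" and cl: "opnorm (op_diff x (lincomb \<sigma> c F)) < \<delta>"
      using CredD[OF x d(1)] by auto
    show ?thesis using d(2)[OF F cl] lincomb_CG[OF F] by blast
  qed
  then show ?thesis using T unfolding is_Mext_def Cred_def by blast
qed

lemma isMext_fhat:
  assumes s: "cocycle2 \<sigma>" and x: "x \<in> Cred \<sigma>" and T: "is_Mext \<sigma> \<phi> x T"
  shows "fhat T = (\<lambda>g. \<phi> g * fhat x g)"
proof
  fix g
  have bT: "bounded_op T" using T unfolding is_Mext_def by auto
  have bx: "bounded_op x" using x by (rule Cred_bounded)
  have "cmod (fhat T g - \<phi> g * fhat x g) \<le> 0 + \<epsilon>" if e: "\<epsilon> > 0" for \<epsilon>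
  proof -
    define \<epsilon>' where "\<epsilon>' = \<epsilon> / (1 + cmod (\<phi> g))"
    have e': "\<epsilon>' > 0" using e by (simp add: \<epsilon>'_def add_pos_nonneg)
    obtain \<delta> where d: "\<delta> > 0" "\<And>c F. finite F \<Longrightarrow> opnorm (op_diff x (lincomb \<sigma> c F)) < \<delta> \<Longrightarrow>
        opnorm (op_diff T (lincomb \<sigma> (\<lambda>g. \<phi> g * c g) F)) < \<epsilon>'"
      using T e' unfolding is_Mext_def by meson
    obtain c F where F: "finite F" and cl: "opnorm (op_diff x (lincomb \<sigma> c F)) < min \<delta> \<epsilon>'"
      using CredD[OF x, of "min \<delta> \<epsilon>'"] d(1) e' by auto
    have fl: "fhat (lincomb \<sigma> (\<lambda>g. \<phi> g * c g) F) g = \<phi> g * fhat (lincomb \<sigma> c F) g"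
      by (simp add: fhat_lincomb[OF s F])
    have "fhat T g - \<phi> g * fhat x g = (fhat T g - fhat (lincomb \<sigma> (\<lambda>g. \<phi> g * c g) F) g)
        + \<phi> g * (fhat (lincomb \<sigma> c F) g - fhat x g)"
      unfolding fl by (simp add: algebra_simps)
    then have "cmod (fhat T g - \<phi> g * fhat x g) \<le> cmod (fhat T g - fhat (lincomb \<sigma> (\<lambda>g. \<phi> g * c g) F) g)
        + cmod (\<phi> g) * cmod (fhat (lincomb \<sigma> c F) g - fhat x g)"
      by (metis norm_triangle_ineq norm_mult)
    also have "\<dots> \<le> opnorm (op_diff T (lincomb \<sigma> (\<lambda>g. \<phi> g * c g) F)) + cmod (\<phi> g) * opnorm (op_diff (lincomb \<sigma> c F) x)"
      by (intro add_mono mult_left_mono fhat_diff_bound bT bx bounded_lincomb[OF s F]) auto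
    also have "\<dots> \<le> \<epsilon>' + cmod (\<phi> g) * \<epsilon>'"
      using d(2)[OF F, of c] cl opnorm_diff_sym[of x "lincomb \<sigma> c F"]
      by (intro add_mono mult_left_mono) auto
    also have "\<dots> = (1 + cmod (\<phi> g)) * \<epsilon>'" by (simp add: algebra_simps)
    also have "\<dots> = \<epsilon>"
    proof -
      have "1 + cmod (\<phi> g) \<noteq> 0" using norm_ge_zero[of "\<phi> g"] by linarith
      then show ?thesis unfolding \<epsilon>'_def by simp
    qed
    finally show ?thesis by simp
  qed
  then have "cmod (fhat T g - \<phi> g * fhat x g) \<le> 0" by (rule field_le_epsilon)
  then show "fhat T g = \<phi> g * fhat x g" by simp
qed

definition Sop :: "('g::mgroup \<Rightarrow> 'g \<Rightarrow> complex) \<Rightarrow> ('g \<Rightarrow> complex) \<Rightarrow> 'g set \<Rightarrow> 'g op \<Rightarrow> 'g op" where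
  "Sop \<sigma> \<phi> E x = lincomb \<sigma> (\<lambda>g. \<phi> g * fhat x g) E"

lemma lincomb_lin_coeff:
  "lincomb \<sigma> (\<lambda>g. a * c g + b * d g) E = oplin a (lincomb \<sigma> c E) b (lincomb \<sigma> d E)"
  by (simp add: lincomb_def oplin_def sum_distrib_left sum.distrib algebra_simps fun_eq_iff)

lemma fhat_oplin: "fhat (oplin a x b y) g = a * fhat x g + b * fhat y g"
  by (simp add: fhat_def oplin_def)

lemma Sop_oplin: "Sop \<sigma> \<phi> E (oplin a x b y) = oplin a (Sop \<sigma> \<phi> E x) b (Sop \<sigma> \<phi> E y)"
proof -
  have "Sop \<sigma> \<phi> E (oplin a x b y) = lincomb \<sigma> (\<lambda>g. a * (\<phi> g * fhat x g) + b * (\<phi> g * fhat y g)) E"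
    unfolding Sop_def fhat_oplin by (simp add: algebra_simps)
  then show ?thesis by (simp add: lincomb_lin_coeff Sop_def)
qed

lemma bounded_Sop: "cocycle2 \<sigma> \<Longrightarrow> finite E \<Longrightarrow> bounded_op (Sop \<sigma> \<phi> E x)"
  unfolding Sop_def by (rule bounded_lincomb)

lemma opnorm_Sop:
  assumes s: "cocycle2 \<sigma>" and E: "finite E" and x: "bounded_op x"
  shows "opnorm (Sop \<sigma> \<phi> E x) \<le> (\<Sum>g\<in>E. cmod (\<phi> g)) * opnorm x"
proof -
  have "opnorm (Sop \<sigma> \<phi> E x) \<le> (\<Sum>g\<in>E. cmod (\<phi> g * fhat x g))"
    unfolding Sop_def by (rule opnorm_lincomb[OF s E])
  also have "\<dots> \<le> (\<Sum>g\<in>E. cmod (\<phi> g) * opnorm x)"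
    by (intro sum_mono) (simp add: norm_mult fhat_bound[OF x] mult_left_mono)
  also have "\<dots> = (\<Sum>g\<in>E. cmod (\<phi> g)) * opnorm x" by (simp add: sum_distrib_right)
  finally show ?thesis .
qed

lemma opnorm_neg: "opnorm (\<lambda>\<xi> h. - T \<xi> h) = opnorm T"
proof -
  have "l2norm (T \<xi>) = l2norm (\<lambda>h. - T \<xi> h)" for \<xi>
    by (rule l2norm_cong) simp
  then show ?thesis unfolding opnorm_def by simp
qed

lemma zero_op_Cred: "cocycle2 \<sigma> \<Longrightarrow> (\<lambda>\<xi> h. 0) \<in> Cred \<sigma>"
  using lincomb_Cred[of \<sigma> "{}" c] by (simp add: lincomb_def)

lemma Sop_zero:
  assumes "bounded_op z" "opnorm z \<le> 0"
  shows "Sop \<sigma> \<phi> E z = (\<lambda>\<xi> h. 0)"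
proof -
  have "fhat z g = 0" for g using opnorm_eq0D[OF assms delta_l2] by (simp add: fhat_def)
  then show ?thesis by (simp add: Sop_def lincomb_def)
qed

lemma MCF_bound:
  fixes \<sigma> :: "'g::mgroup \<Rightarrow> 'g \<Rightarrow> complex"
  assumes s: "cocycle2 \<sigma>" and m: "\<phi> \<in> MCF \<sigma>"
  shows "\<exists>K\<ge>0. \<forall>E z. finite E \<longrightarrow> z \<in> Cred \<sigma> \<longrightarrow> opnorm (Sop \<sigma> \<phi> E z) \<le> K * opnorm z"
proof -
  define M where "M = {x \<in> Cred \<sigma>. \<forall>\<xi>. \<xi> \<notin> l2 \<longrightarrow> x \<xi> = (\<lambda>h. 0)}"
  define d where "d x y = (if x \<in> M \<and> y \<in> M then opnorm (op_diff x y) else 0)" for x y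
  have MC: "x \<in> M \<Longrightarrow> x \<in> Cred \<sigma>" for x by (simp add: M_def)
  have Mb: "x \<in> M \<Longrightarrow> bounded_op x" for x using MC Cred_bounded by blast
  have Mz: "x \<in> M \<Longrightarrow> \<xi> \<notin> l2 \<Longrightarrow> x \<xi> = (\<lambda>h. 0)" for x \<xi> by (simp add: M_def)
  have M_oplin: "oplin a x b y \<in> M" if "x \<in> M" "y \<in> M" for a b x y
    using that Cred_oplin[OF s] unfolding M_def by (auto simp: oplin_def)
  have zM: "(\<lambda>\<xi> h. 0) \<in> M" using zero_op_Cred[OF s] by (simp add: M_def)
  interpret Ms: Metric_space M d
  proof
    show "0 \<le> d x y" for x y using opnorm_nonneg[OF bounded_op_diff[OF Mb Mb]] by (simp add: d_def)
    show "d x y = d y x" for x y unfolding d_def using opnorm_diff_sym by metis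
    show "d x y = 0 \<longleftrightarrow> x = y" if "x \<in> M" "y \<in> M" for x y
    proof
      assume "d x y = 0"
      then have "opnorm (op_diff x y) \<le> 0" using that by (simp add: d_def)
      then have "op_diff x y \<xi> = (\<lambda>h. 0)" if "\<xi> \<in> l2" for \<xi>
        using opnorm_eq0D[OF bounded_op_diff[OF Mb Mb] _ that] \<open>x \<in> M\<close> \<open>y \<in> M\<close> by blast
      then have "x \<xi> = y \<xi>" for \<xi>
        using Mz[OF \<open>x \<in> M\<close>, of \<xi>] Mz[OF \<open>y \<in> M\<close>, of \<xi>]
        by (cases "\<xi> \<in> l2") (auto simp: op_diff_def fun_eq_iff)
      then show "x = y" by blast
    qed (simp add: d_def opnorm_diff_self)
    show "d x z \<le> d x y + d y z" if "x \<in> M" "y \<in> M" "z \<in> M" for x y z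
      using opnorm_tri[OF Mb Mb Mb, OF that] that by (simp add: d_def)
  qed
  have complete: "Ms.mcomplete"
    unfolding Ms.mcomplete_def
  proof (intro allI impI)
    fix X :: "nat \<Rightarrow> 'g op" assume "Ms.MCauchy X"
    then have XM: "\<And>n. X n \<in> M" and cX: "\<And>\<epsilon>. \<epsilon> > 0 \<Longrightarrow> \<exists>N. \<forall>n n'. N \<le> n \<longrightarrow> N \<le> n' \<longrightarrow> d (X n) (X n') < \<epsilon>"
      unfolding Ms.MCauchy_def by auto
    have cauX: "\<exists>N. \<forall>m\<ge>N. \<forall>n\<ge>N. opnorm (op_diff (X m) (X n)) < \<epsilon>" if "\<epsilon> > 0" for \<epsilon>
    proof -
      have dd: "d (X m) (X n) = opnorm (op_diff (X m) (X n))" for m n using XM[of m] XM[of n] by (simp add: d_def)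
      show ?thesis using cX[OF that] unfolding dd by blast
    qed
    obtain L where bL: "bounded_op L" and XL: "\<And>\<epsilon>. \<epsilon> > 0 \<Longrightarrow> \<exists>N. \<forall>n\<ge>N. opnorm (op_diff (X n) L) \<le> \<epsilon>"
      using op_complete[of X, OF Mb[OF XM] cauX] by blast
    define L' where "L' \<xi> = (if \<xi> \<in> l2 then L \<xi> else (\<lambda>h. 0))" for \<xi>
    have LL': "\<xi> \<in> l2 \<Longrightarrow> L \<xi> = L' \<xi>" for \<xi> by (simp add: L'_def)
    have dL: "opnorm (op_diff (X n) L') = opnorm (op_diff (X n) L)" for n
      by (rule opnorm_cong) (simp add: op_diff_def L'_def)
    have "L \<in> Cred \<sigma>"
    proof -
      have "\<exists>y\<in>CG \<sigma>. opnorm (op_diff L y) < \<epsilon>" if e: "\<epsilon> > 0" for \<epsilon>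
      proof -
        obtain N where N: "\<And>n. n \<ge> N \<Longrightarrow> opnorm (op_diff (X n) L) \<le> \<epsilon>/2" using XL[of "\<epsilon>/2"] e by auto
        have "\<forall>\<epsilon>>0. \<exists>y\<in>CG \<sigma>. opnorm (op_diff (X N) y) < \<epsilon>" using MC[OF XM[of N]] unfolding Cred_def by blast
        then obtain y where y: "y \<in> CG \<sigma>" "opnorm (op_diff (X N) y) < \<epsilon>/2"
          using e half_gt_zero by blast
        obtain c F where cF: "finite F" "y = lincomb \<sigma> c F" using y(1) unfolding CG_def by blast
        have by': "bounded_op y" unfolding cF(2) by (rule bounded_lincomb[OF s cF(1)])
        have "opnorm (op_diff L y) \<le> opnorm (op_diff L (X N)) + opnorm (op_diff (X N) y)"
          by (rule opnorm_tri[OF bL Mb[OF XM] by'])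
        also have "\<dots> < \<epsilon>" using N[of N] y(2) opnorm_diff_sym[of L "X N"] by simp
        finally show ?thesis using y(1) by blast
      qed
      then show ?thesis using bL unfolding Cred_def by blast
    qed
    then have "L' \<in> Cred \<sigma>" by (rule Cred_cong) (simp add: L'_def)
    moreover have "\<forall>\<xi>. \<xi> \<notin> l2 \<longrightarrow> L' \<xi> = (\<lambda>h. 0)" by (simp add: L'_def)
    ultimately have L'M: "L' \<in> M" by (simp add: M_def)
    have "limitin Ms.mtopology X L' sequentially"
      unfolding Ms.limitin_metric
    proof (intro conjI L'M allI impI)
      fix \<epsilon> :: real assume e: "\<epsilon> > 0"
      obtain N where N: "\<And>n. n \<ge> N \<Longrightarrow> opnorm (op_diff (X n) L) \<le> \<epsilon>/2" using XL[of "\<epsilon>/2"] e by auto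
      show "\<forall>\<^sub>F n in sequentially. X n \<in> M \<and> d (X n) L' < \<epsilon>"
        unfolding eventually_sequentially
      proof (intro exI allI impI)
        fix n assume n: "N \<le> n"
        have "d (X n) L' = opnorm (op_diff (X n) L)" using XM[of n] L'M dL[of n] by (simp add: d_def)
        then show "X n \<in> M \<and> d (X n) L' < \<epsilon>" using N[OF n] XM[of n] e by simp
      qed
    qed
    then show "\<exists>x. limitin Ms.mtopology X x sequentially" by blast
  qed
  define cF where "cF F = (\<Sum>g\<in>F. cmod (\<phi> g))" for F
  have cF0: "cF F \<ge> 0" for F by (simp add: cF_def sum_nonneg)
  define Ek where "Ek k = {x \<in> M. \<forall>F. finite F \<longrightarrow> opnorm (Sop \<sigma> \<phi> F x) \<le> real k}" for k :: nat
  have closed: "closedin Ms.mtopology (Ek k)" for k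
    unfolding Ms.metric_closedin_iff_sequentially_closed
  proof (intro conjI allI impI)
    show "Ek k \<subseteq> M" by (auto simp: Ek_def)
    fix X l assume a: "range X \<subseteq> Ek k \<and> limitin Ms.mtopology X l sequentially"
    then have lM: "l \<in> M" and ev: "\<And>\<epsilon>. \<epsilon> > 0 \<Longrightarrow> \<forall>\<^sub>F n in sequentially. X n \<in> M \<and> d (X n) l < \<epsilon>"
      unfolding Ms.limitin_metric by auto
    have XE: "X n \<in> Ek k" for n using a by auto
    have "opnorm (Sop \<sigma> \<phi> F l) \<le> real k" if F: "finite F" for F
    proof -
      have "opnorm (Sop \<sigma> \<phi> F l) \<le> real k + \<epsilon>" if e: "\<epsilon> > 0" for \<epsilon>
      proof -
        have "\<epsilon> / (cF F + 1) > 0" using e cF0[of F] by simp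
        from ev[OF this] obtain n where n: "X n \<in> M" "d (X n) l < \<epsilon> / (cF F + 1)"
          unfolding eventually_sequentially by auto
        have dn: "opnorm (op_diff l (X n)) < \<epsilon> / (cF F + 1)"
          using n lM opnorm_diff_sym[of l "X n"] by (simp add: d_def)
        have eq: "Sop \<sigma> \<phi> F l = oplin 1 (Sop \<sigma> \<phi> F (X n)) 1 (Sop \<sigma> \<phi> F (op_diff l (X n)))"
          unfolding op_diff_oplin Sop_oplin by (simp add: oplin_def fun_eq_iff)
        have "opnorm (Sop \<sigma> \<phi> F l) \<le> cmod 1 * opnorm (Sop \<sigma> \<phi> F (X n)) + cmod 1 * opnorm (Sop \<sigma> \<phi> F (op_diff l (X n)))"
          unfolding eq by (rule opnorm_oplin[OF bounded_Sop[OF s F] bounded_Sop[OF s F]])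
        also have "\<dots> \<le> real k + cF F * opnorm (op_diff l (X n))"
        proof -
          have "opnorm (Sop \<sigma> \<phi> F (X n)) \<le> real k" using XE[of n] F by (simp add: Ek_def)
          then show ?thesis using opnorm_Sop[OF s F bounded_op_diff[OF Mb[OF lM] Mb[OF n(1)]], of \<phi>]
            unfolding cF_def by simp
        qed
        also have "\<dots> \<le> real k + (cF F + 1) * (\<epsilon> / (cF F + 1))"
          using dn cF0[of F] opnorm_nonneg[OF bounded_op_diff[OF Mb[OF lM] Mb[OF n(1)]]]
          by (intro add_left_mono mult_mono) auto
        also have "\<dots> = real k + \<epsilon>" using cF0[of F] by simp
        finally show ?thesis .
      qed
      then show ?thesis by (rule field_le_epsilon)
    qed
    then show "l \<in> Ek k" using lM by (simp add: Ek_def)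
  qed
  have union: "\<Union> (range Ek) = M"
  proof
    show "\<Union> (range Ek) \<subseteq> M" by (auto simp: Ek_def)
    show "M \<subseteq> \<Union> (range Ek)"
    proof
      fix x assume xM: "x \<in> M"
      obtain T where T: "op_sums \<sigma> (\<lambda>g. \<phi> g * fhat x g) T"
        using m MC[OF xM] unfolding MCF_def by blast
      then have bT: "bounded_op T" and lim: "((\<lambda>F. opnorm (op_diff (lincomb \<sigma> (\<lambda>g. \<phi> g * fhat x g) F) T)) \<longlongrightarrow> 0) (finite_subsets_at_top UNIV)"
        unfolding op_sums_def by auto
      have "\<forall>\<^sub>F F in finite_subsets_at_top UNIV. opnorm (op_diff (lincomb \<sigma> (\<lambda>g. \<phi> g * fhat x g) F) T) < 1"
        using order_tendstoD(2)[OF lim, of 1] by simp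
      then obtain F0 where F0: "finite F0" "\<And>F. finite F \<Longrightarrow> F0 \<subseteq> F \<Longrightarrow> opnorm (op_diff (Sop \<sigma> \<phi> F x) T) < 1"
        unfolding eventually_finite_subsets_at_top Sop_def by auto
      define B where "B = opnorm T + 1 + cF F0 * opnorm x"
      have "opnorm (Sop \<sigma> \<phi> F x) \<le> B" if F: "finite F" for F
      proof -
        have eq: "Sop \<sigma> \<phi> F x = oplin 1 (Sop \<sigma> \<phi> (F \<union> F0) x) (-1) (Sop \<sigma> \<phi> (F0 - F) x)"
        proof -
          have su: "sum f (F \<union> F0) = sum f F + sum f (F0 - F)" for f :: "'g \<Rightarrow> complex"
            using sum.union_disjoint[of F "F0 - F" f] F F0(1) by (simp add: Un_Diff_cancel)
          show ?thesis unfolding Sop_def oplin_def lincomb_def by (simp add: su)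
        qed
        have "opnorm (Sop \<sigma> \<phi> F x) \<le> cmod 1 * opnorm (Sop \<sigma> \<phi> (F \<union> F0) x) + cmod (-1) * opnorm (Sop \<sigma> \<phi> (F0 - F) x)"
          unfolding eq by (rule opnorm_oplin[OF bounded_Sop[OF s] bounded_Sop[OF s]]) (use F F0 in auto)
        also have "\<dots> \<le> (opnorm T + 1) + cF F0 * opnorm x"
        proof (intro add_mono)
          have "opnorm (Sop \<sigma> \<phi> (F \<union> F0) x) \<le> opnorm (op_diff (Sop \<sigma> \<phi> (F \<union> F0) x) T) + opnorm T"
          proof -
            have "Sop \<sigma> \<phi> (F \<union> F0) x = oplin 1 (op_diff (Sop \<sigma> \<phi> (F \<union> F0) x) T) 1 T"
              by (simp add: oplin_def op_diff_def fun_eq_iff)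
            then have "opnorm (Sop \<sigma> \<phi> (F \<union> F0) x) = opnorm (oplin 1 (op_diff (Sop \<sigma> \<phi> (F \<union> F0) x) T) 1 T)"
              by (rule arg_cong[where f=opnorm])
            also have "\<dots> \<le> opnorm (op_diff (Sop \<sigma> \<phi> (F \<union> F0) x) T) + opnorm T"
              using opnorm_oplin[OF bounded_op_diff[OF bounded_Sop[OF s finite_UnI[OF F F0(1)]] bT] bT, where a=1 and b=1]
              by simp
            finally show ?thesis .
          qed
          then show "cmod 1 * opnorm (Sop \<sigma> \<phi> (F \<union> F0) x) \<le> opnorm T + 1"
            using F0(2)[of "F \<union> F0"] F F0(1) by simp
          have "opnorm (Sop \<sigma> \<phi> (F0 - F) x) \<le> cF (F0 - F) * opnorm x"
            unfolding cF_def by (rule opnorm_Sop[OF s _ Mb[OF xM]]) (use F0 in auto)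
          also have "\<dots> \<le> cF F0 * opnorm x"
            unfolding cF_def using F0(1) opnorm_nonneg[OF Mb[OF xM]]
            by (intro mult_right_mono sum_mono2) auto
          finally show "cmod (-1) * opnorm (Sop \<sigma> \<phi> (F0 - F) x) \<le> cF F0 * opnorm x" by simp
        qed
        finally show ?thesis by (simp add: B_def)
      qed
      moreover have "B \<le> real (nat \<lceil>B\<rceil>)" by (rule real_nat_ceiling_ge)
      ultimately have "x \<in> Ek (nat \<lceil>B\<rceil>)" using xM unfolding Ek_def
        by (blast intro: order_trans)
      then show "x \<in> \<Union> (range Ek)" by blast
    qed
  qed
  have intM: "Ms.mtopology interior_of M = M"
    using interior_of_topspace[of Ms.mtopology] by simp
  have "\<exists>k. Ms.mtopology interior_of (Ek k) \<noteq> {}"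
  proof (rule ccontr)
    assume na: "\<not> (\<exists>k. Ms.mtopology interior_of (Ek k) \<noteq> {})"
    have "Ms.mtopology interior_of \<Union> (range Ek) = {}"
    proof (rule Ms.metric_Baire_category_alt[OF complete])
      show "countable (range Ek)" by simp
      fix T assume "T \<in> range Ek"
      then obtain k where "T = Ek k" by blast
      then show "closedin Ms.mtopology T \<and> Ms.mtopology interior_of T = {}" using closed na by blast
    qed
    then have "M = {}" unfolding union intM .
    then show False using zM by blast
  qed
  then obtain k where k: "Ms.mtopology interior_of (Ek k) \<noteq> {}" by blast
  then obtain x0 where x0: "x0 \<in> Ms.mtopology interior_of (Ek k)" by blast
  have op: "openin Ms.mtopology (Ms.mtopology interior_of (Ek k))" by (rule openin_interior_of)
  have "\<exists>r>0. Ms.mball x0 r \<subseteq> Ms.mtopology interior_of (Ek k)"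
    using op x0 unfolding Ms.openin_mtopology by blast
  then obtain r where r: "r > 0" "Ms.mball x0 r \<subseteq> Ms.mtopology interior_of (Ek k)" by blast
  have ball: "Ms.mball x0 r \<subseteq> Ek k" using r(2) interior_of_subset[of Ms.mtopology "Ek k"] by (rule order_trans)
  have x0E: "x0 \<in> Ek k" using interior_of_subset[of Ms.mtopology "Ek k"] x0 by (rule subsetD)
  have x0M: "x0 \<in> M" using x0E by (simp add: Ek_def)
  have Sx0: "opnorm (Sop \<sigma> \<phi> F x0) \<le> real k" if "finite F" for F using x0E that by (simp add: Ek_def)
  have small: "opnorm (Sop \<sigma> \<phi> F z) \<le> 2 * real k" if zM: "z \<in> M" and zr: "opnorm z < r" and F: "finite F" for z F
  proof -
    define w where "w = oplin 1 x0 1 z"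
    have wM: "w \<in> M" unfolding w_def by (rule M_oplin[OF x0M zM])
    have "op_diff x0 w = (\<lambda>\<xi> h. - z \<xi> h)" by (simp add: w_def op_diff_def oplin_def fun_eq_iff)
    then have "d x0 w = opnorm z" using x0M wM opnorm_neg[of z] by (simp add: d_def)
    then have "w \<in> Ms.mball x0 r" using zr x0M wM by simp
    then have "w \<in> Ek k" using ball by blast
    then have Sw: "opnorm (Sop \<sigma> \<phi> F w) \<le> real k" using F by (simp add: Ek_def)
    have "Sop \<sigma> \<phi> F z = oplin 1 (Sop \<sigma> \<phi> F w) (-1) (Sop \<sigma> \<phi> F x0)"
      unfolding w_def Sop_oplin by (simp add: oplin_def fun_eq_iff)
    then have "opnorm (Sop \<sigma> \<phi> F z) = opnorm (oplin 1 (Sop \<sigma> \<phi> F w) (-1) (Sop \<sigma> \<phi> F x0))"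
      by (rule arg_cong[where f=opnorm])
    also have "\<dots> \<le> cmod 1 * opnorm (Sop \<sigma> \<phi> F w) + cmod (-1) * opnorm (Sop \<sigma> \<phi> F x0)"
      by (rule opnorm_oplin[OF bounded_Sop[OF s F] bounded_Sop[OF s F]])
    also have "\<dots> \<le> 2 * real k" using Sw Sx0[OF F] by simp
    finally show ?thesis .
  qed
  define K where "K = 4 * real k / r"
  have K0: "K \<ge> 0" using r(1) by (simp add: K_def)
  have boundM: "opnorm (Sop \<sigma> \<phi> F z) \<le> K * opnorm z" if zM: "z \<in> M" and F: "finite F" for z F
  proof (cases "opnorm z \<le> 0")
    case True
    have "Sop \<sigma> \<phi> F z = (\<lambda>\<xi> h. 0)" by (rule Sop_zero[OF Mb[OF zM] True])
    moreover have "opnorm (\<lambda>\<xi> (h::'g). 0::complex) \<le> 0" by (rule opnorm_le) (auto simp: l2norm_zero)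
    moreover have "0 \<le> K * opnorm z" using K0 opnorm_nonneg[OF Mb[OF zM]] by simp
    ultimately show ?thesis by simp
  next
    case False
    then have zp: "opnorm z > 0" by simp
    define t where "t = r / (2 * opnorm z)"
    have tp: "t > 0" using zp r(1) by (simp add: t_def)
    define a where "a = complex_of_real t"
    have ca: "cmod a = t" using tp by (simp add: a_def)
    have a0: "a \<noteq> 0" using tp by (simp add: a_def)
    define w where "w = oplin a z 0 z"
    have wM: "w \<in> M" unfolding w_def by (rule M_oplin[OF zM zM])
    have "opnorm w \<le> cmod a * opnorm z + cmod 0 * opnorm z"
      unfolding w_def by (rule opnorm_oplin[OF Mb[OF zM] Mb[OF zM]])
    also have "\<dots> = r / 2" using zp by (simp add: ca t_def)
    also have "\<dots> < r" using r(1) by simp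
    finally have Sw: "opnorm (Sop \<sigma> \<phi> F w) \<le> 2 * real k" by (rule small[OF wM _ F])
    have "Sop \<sigma> \<phi> F z = oplin (1 / a) (Sop \<sigma> \<phi> F w) 0 (Sop \<sigma> \<phi> F w)"
      unfolding w_def Sop_oplin using a0 by (simp add: oplin_def fun_eq_iff)
    then have "opnorm (Sop \<sigma> \<phi> F z) = opnorm (oplin (1 / a) (Sop \<sigma> \<phi> F w) 0 (Sop \<sigma> \<phi> F w))"
      by (rule arg_cong[where f=opnorm])
    also have "\<dots> \<le> cmod (1 / a) * opnorm (Sop \<sigma> \<phi> F w) + cmod 0 * opnorm (Sop \<sigma> \<phi> F w)"
      by (rule opnorm_oplin[OF bounded_Sop[OF s F] bounded_Sop[OF s F]])
    also have "\<dots> \<le> (1 / t) * (2 * real k)"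
      using Sw tp by (simp add: norm_divide ca divide_right_mono)
    also have "\<dots> = K * opnorm z" using zp r(1) by (simp add: t_def K_def field_simps)
    finally show ?thesis .
  qed
  have "opnorm (Sop \<sigma> \<phi> F z) \<le> K * opnorm z" if F: "finite F" and z: "z \<in> Cred \<sigma>" for F z
  proof -
    define z' where "z' \<xi> = (if \<xi> \<in> l2 then z \<xi> else (\<lambda>h. 0))" for \<xi>
    have "z' \<in> Cred \<sigma>" using z by (rule Cred_cong) (simp add: z'_def)
    then have z'M: "z' \<in> M" by (simp add: M_def z'_def)
    have "opnorm z' = opnorm z" by (rule opnorm_cong) (simp add: z'_def)
    moreover have "Sop \<sigma> \<phi> F z' = Sop \<sigma> \<phi> F z" by (simp add: Sop_def fhat_def z'_def delta_l2)
    ultimately show ?thesis using boundM[OF z'M F] by simp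
  qed
  then show ?thesis using K0 by blast
qed

lemma Mext_is:
  assumes "cocycle2 \<sigma>" "\<phi> \<in> MA \<sigma>" "x \<in> Cred \<sigma>"
  shows "is_Mext \<sigma> \<phi> x (Mext \<sigma> \<phi> x)"
  unfolding Mext_def by (rule someI_ex[OF Mext_exists[OF assms]])

lemma Sop_lincomb:
  assumes s: "cocycle2 \<sigma>" and F: "finite F" and E: "finite E" and FE: "F \<subseteq> E"
  shows "Sop \<sigma> \<phi> E (lincomb \<sigma> c F) = lincomb \<sigma> (\<lambda>g. \<phi> g * c g) F"
proof -
  have "Sop \<sigma> \<phi> E (lincomb \<sigma> c F) = lincomb \<sigma> (\<lambda>g. if g \<in> F then \<phi> g * c g else 0) E"
    unfolding Sop_def by (rule lincomb_cong) (simp add: fhat_lincomb[OF s F])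
  also have "\<dots> = lincomb \<sigma> (\<lambda>g. \<phi> g * c g) F"
    by (rule lincomb_ext[symmetric, OF E FE])
  finally show ?thesis .
qed

lemma MCF_MA:
  fixes \<sigma> :: "'g::mgroup \<Rightarrow> 'g \<Rightarrow> complex"
  assumes s: "cocycle2 \<sigma>" and m: "\<phi> \<in> MCF \<sigma>"
  shows "\<phi> \<in> MA \<sigma>"
proof -
  obtain K where K: "\<And>E z. finite E \<Longrightarrow> z \<in> Cred \<sigma> \<Longrightarrow> opnorm (Sop \<sigma> \<phi> E z) \<le> K * opnorm z"
    using MCF_bound[OF s m] by blast
  have "opnorm (lincomb \<sigma> (\<lambda>g. \<phi> g * c g) F) \<le> K * opnorm (lincomb \<sigma> c F)" if F: "finite F" for c F
    using K[OF F lincomb_Cred[OF s F, of c]] Sop_lincomb[OF s F F subset_refl, of \<phi> c] by simp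
  then show ?thesis unfolding MA_def by blast
qed

lemma MCF_sums:
  fixes \<sigma> :: "'g::mgroup \<Rightarrow> 'g \<Rightarrow> complex"
  assumes s: "cocycle2 \<sigma>" and m: "\<phi> \<in> MCF \<sigma>" and x: "x \<in> Cred \<sigma>"
  shows "op_sums \<sigma> (\<lambda>g. \<phi> g * fhat x g) (Mext \<sigma> \<phi> x)"
proof -
  obtain K where K0: "K \<ge> 0" and K: "\<And>E z. finite E \<Longrightarrow> z \<in> Cred \<sigma> \<Longrightarrow> opnorm (Sop \<sigma> \<phi> E z) \<le> K * opnorm z"
    using MCF_bound[OF s m] by blast
  obtain T where T: "op_sums \<sigma> (\<lambda>g. \<phi> g * fhat x g) T" using m x unfolding MCF_def by blast
  then have bT: "bounded_op T" and lim: "((\<lambda>F. opnorm (op_diff (Sop \<sigma> \<phi> F x) T)) \<longlongrightarrow> 0) (finite_subsets_at_top UNIV)"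
    unfolding op_sums_def Sop_def by auto
  have bx: "bounded_op x" using x by (rule Cred_bounded)
  have TM: "is_Mext \<sigma> \<phi> x T"
    unfolding is_Mext_def
  proof (intro conjI bT allI impI)
    fix \<epsilon> :: real assume e: "\<epsilon> > 0"
    define \<delta> where "\<delta> = \<epsilon> / (2 * (K + 1))"
    have d: "\<delta> > 0" using e K0 by (simp add: \<delta>_def)
    have "\<forall>\<^sub>F E in finite_subsets_at_top UNIV. opnorm (op_diff (Sop \<sigma> \<phi> E x) T) < \<epsilon>/2"
      using order_tendstoD(2)[OF lim, of "\<epsilon>/2"] e by simp
    then obtain F0 where F0: "finite F0" "\<And>E. finite E \<Longrightarrow> F0 \<subseteq> E \<Longrightarrow> opnorm (op_diff (Sop \<sigma> \<phi> E x) T) < \<epsilon>/2"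
      unfolding eventually_finite_subsets_at_top by auto
    have "opnorm (op_diff T (lincomb \<sigma> (\<lambda>g. \<phi> g * c g) F)) < \<epsilon>"
      if F: "finite F" and cl: "opnorm (op_diff x (lincomb \<sigma> c F)) < \<delta>" for c F
    proof -
      define E where "E = F \<union> F0"
      have E: "finite E" "F \<subseteq> E" "F0 \<subseteq> E" using F F0(1) by (auto simp: E_def)
      have SE: "Sop \<sigma> \<phi> E (lincomb \<sigma> c F) = lincomb \<sigma> (\<lambda>g. \<phi> g * c g) F"
        by (rule Sop_lincomb[OF s F E(1,2)])
      have xl: "op_diff x (lincomb \<sigma> c F) \<in> Cred \<sigma>"
        unfolding op_diff_oplin by (rule Cred_oplin[OF s x lincomb_Cred[OF s F]])
      have eq: "op_diff T (lincomb \<sigma> (\<lambda>g. \<phi> g * c g) F)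
          = oplin 1 (op_diff T (Sop \<sigma> \<phi> E x)) 1 (Sop \<sigma> \<phi> E (op_diff x (lincomb \<sigma> c F)))"
        unfolding SE[symmetric] op_diff_oplin Sop_oplin by (simp add: oplin_def fun_eq_iff)
      have "opnorm (op_diff T (lincomb \<sigma> (\<lambda>g. \<phi> g * c g) F))
          \<le> cmod 1 * opnorm (op_diff T (Sop \<sigma> \<phi> E x)) + cmod 1 * opnorm (Sop \<sigma> \<phi> E (op_diff x (lincomb \<sigma> c F)))"
        unfolding eq by (rule opnorm_oplin[OF bounded_op_diff[OF bT bounded_Sop[OF s E(1)]] bounded_Sop[OF s E(1)]])
      also have "\<dots> \<le> opnorm (op_diff (Sop \<sigma> \<phi> E x) T) + K * opnorm (op_diff x (lincomb \<sigma> c F))"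
        using K[OF E(1) xl] opnorm_diff_sym[of T "Sop \<sigma> \<phi> E x"] by simp
      also have "\<dots> < \<epsilon>/2 + K * \<delta>"
      proof (rule add_less_le_mono)
        show "opnorm (op_diff (Sop \<sigma> \<phi> E x) T) < \<epsilon>/2" by (rule F0(2)[OF E(1,3)])
        show "K * opnorm (op_diff x (lincomb \<sigma> c F)) \<le> K * \<delta>" using cl K0 by (intro mult_left_mono) auto
      qed
      also have "\<dots> \<le> \<epsilon>/2 + \<epsilon>/2"
      proof -
        have "K * \<delta> \<le> (K + 1) * \<delta>" using d by (simp add: algebra_simps)
        also have "\<dots> = \<epsilon>/2" using K0 by (simp add: \<delta>_def field_simps)
        finally show ?thesis by simp
      qed
      finally show ?thesis by simp
    qed
    then show "\<exists>\<delta>>0. \<forall>c F. finite F \<and> opnorm (op_diff x (lincomb \<sigma> c F)) < \<delta> \<longrightarrow>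
        opnorm (op_diff T (lincomb \<sigma> (\<lambda>g. \<phi> g * c g) F)) < \<epsilon>" using d by blast
  qed
  have MM: "is_Mext \<sigma> \<phi> x (Mext \<sigma> \<phi> x)" by (rule Mext_is[OF s MCF_MA[OF s m] x])
  have eqT: "\<xi> \<in> l2 \<Longrightarrow> T \<xi> = Mext \<sigma> \<phi> x \<xi>" for \<xi> by (rule Mext_eq[OF s x TM MM])
  have bM: "bounded_op (Mext \<sigma> \<phi> x)" using MM unfolding is_Mext_def by blast
  have "opnorm (op_diff (lincomb \<sigma> (\<lambda>g. \<phi> g * fhat x g) F) (Mext \<sigma> \<phi> x)) = opnorm (op_diff (lincomb \<sigma> (\<lambda>g. \<phi> g * fhat x g) F) T)" for F
    by (rule opnorm_cong) (simp add: op_diff_def eqT)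
  then show ?thesis using T bM unfolding op_sums_def by simp
qed

theorem proposition4p7:
  fixes \<sigma> :: "'g::mgroup \<Rightarrow> 'g \<Rightarrow> complex"
  assumes "cocycle2 \<sigma>"
  shows "MCF \<sigma> \<subseteq> MA \<sigma>
    \<and> MCF \<sigma> = {\<phi> \<in> MA \<sigma>. \<forall>x\<in>Cred \<sigma>. Mext \<sigma> \<phi> x \<in> CF \<sigma>}
    \<and> (\<forall>\<phi>\<in>MCF \<sigma>. \<forall>x\<in>Cred \<sigma>. op_sums \<sigma> (\<lambda>g. \<phi> g * fhat x g) (Mext \<sigma> \<phi> x))"
proof (intro conjI)
  note s = assms
  show sub: "MCF \<sigma> \<subseteq> MA \<sigma>" using MCF_MA[OF s] by blast
  show "\<forall>\<phi>\<in>MCF \<sigma>. \<forall>x\<in>Cred \<sigma>. op_sums \<sigma> (\<lambda>g. \<phi> g * fhat x g) (Mext \<sigma> \<phi> x)"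
    using MCF_sums[OF s] by blast
  show "MCF \<sigma> = {\<phi> \<in> MA \<sigma>. \<forall>x\<in>Cred \<sigma>. Mext \<sigma> \<phi> x \<in> CF \<sigma>}"
  proof (intro equalityI subsetI CollectI conjI ballI)
    fix \<phi> assume m: "\<phi> \<in> MCF \<sigma>"
    then show ma: "\<phi> \<in> MA \<sigma>" using sub by blast
    fix x assume x: "x \<in> Cred \<sigma>"
    have MM: "is_Mext \<sigma> \<phi> x (Mext \<sigma> \<phi> x)" by (rule Mext_is[OF s ma x])
    have "Mext \<sigma> \<phi> x \<in> Cred \<sigma>" by (rule isMext_Cred[OF s x MM])
    moreover have "\<exists>T. op_sums \<sigma> (fhat (Mext \<sigma> \<phi> x)) T"
      unfolding isMext_fhat[OF s x MM] using m x unfolding MCF_def by blast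
    ultimately show "Mext \<sigma> \<phi> x \<in> CF \<sigma>" unfolding CF_def by blast
  next
    fix \<phi> assume "\<phi> \<in> {\<phi> \<in> MA \<sigma>. \<forall>x\<in>Cred \<sigma>. Mext \<sigma> \<phi> x \<in> CF \<sigma>}"
    then have ma: "\<phi> \<in> MA \<sigma>" and cf: "\<And>x. x \<in> Cred \<sigma> \<Longrightarrow> Mext \<sigma> \<phi> x \<in> CF \<sigma>" by auto
    have "\<exists>T. op_sums \<sigma> (\<lambda>g. \<phi> g * fhat x g) T" if x: "x \<in> Cred \<sigma>" for x
    proof -
      have MM: "is_Mext \<sigma> \<phi> x (Mext \<sigma> \<phi> x)" by (rule Mext_is[OF s ma x])
      have "\<exists>T. op_sums \<sigma> (fhat (Mext \<sigma> \<phi> x)) T" using cf[OF x] unfolding CF_def by blast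
      then show ?thesis unfolding isMext_fhat[OF s x MM] .
    qed
    then show "\<phi> \<in> MCF \<sigma>" unfolding MCF_def by blast
  qed
qed

end
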